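(* Let $\Omega\subset\mathbb{R}^n$ be a bounded domain with $C^2$ boundary, $j\in\mathbb{Z}_{\ge0}$, $0<\alpha<1$. Let $U$ be an $n_U$-dimensional linear subspace of $\mathbb{R}^{n\times n}_{sym}$ having a basis $\xi_1\otimes\xi_1,\dots,\xi_{n_U}\otimes\xi_{n_U}$ consisting of matrices of unit matrix norm, and let $\hat M>0$. Then there exist $M_1,M_2>0$ such that for every $\hat D\in C^{j,\alpha}(\overline{\Omega},U)$ with $\|\hat D\|_\alpha\le\hat M$ there are $\hat\Phi\in C^\infty(\overline\Omega,\mathbb{R}^n)$ and $a_i\in C^{j,\alpha}(\overline\Omega,\mathbb{R})$, $1\le i\le n_U$, with $$\hat D+\mathrm{Sym}\nabla\hat\Phi=\sum_{i=1}^{n_U}a_i^2\,\xi_i\otimes\xi_i,$$ $\nabla\hat\Phi$ constant on $\Omega$, and $$\Big\|\sum_{i=1}^{n_U}a_i^2\xi_i\otimes\xi_i\Big\|_\alpha+|\nabla\hat\Phi|+\|\hat\Phi\|_\alpha\le M_1\|\hat D\|_\alpha,\qquad \Big[\sum_{i=1}^{n_U}a_i^2\xi_i\otimes\xi_i\Big]_{j,\alpha}+|\nabla\hat\Phi|+\|\hat\Phi\|_\alpha\le M_2\|\hat D\|_{j+\alpha}.$$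
   Context: $\mathrm{Sym}(B)=\frac12(B+B^T)$; $\xi\otimes\xi=\xi\xi^T$; $\|\cdot\|_\alpha$ is the $C^{0,\alpha}(\overline\Omega)$ norm, $\|\cdot\|_{j+\alpha}$ the $C^{j,\alpha}$ norm, $[\cdot]_{j,\alpha}$ the $\alpha$-Hölder seminorm of $j$-th derivatives, and $|\nabla\hat\Phi|$ the norm of the constant matrix $\nabla\hat\Phi$. *)

theory Defs
  imports "HOL-Analysis.Analysis"
begin

text \<open>Partial derivative in coordinate direction i (defined pointwise; only meaningful
  where it exists).\<close>
definition pdir :: "'n::finite \<Rightarrow> (real^'n \<Rightarrow> 'b::real_normed_vector) \<Rightarrow> real^'n \<Rightarrow> 'b" where
  "pdir i f x = vector_derivative (\<lambda>t. f (x + t *\<^sub>R axis i 1)) (at 0)"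

text \<open>Iterated partial derivative along a multi-index given as a list of directions.\<close>
fun pdiff :: "'n::finite list \<Rightarrow> (real^'n \<Rightarrow> 'b::real_normed_vector) \<Rightarrow> real^'n \<Rightarrow> 'b" where
  "pdiff [] f = f"
| "pdiff (i # is) f = pdir i (pdiff is f)"

text \<open>All partial derivatives of order \<le> k exist at every point of the open set S.\<close>
definition has_pderivs_upto :: "(real^'n::finite) set \<Rightarrow> nat \<Rightarrow> (real^'n \<Rightarrow> 'b::real_normed_vector) \<Rightarrow> bool" where
  "has_pderivs_upto S k f \<longleftrightarrow>
     (\<forall>\<beta> i x. length \<beta> < k \<longrightarrow> x \<in> S \<longrightarrow>
        ((\<lambda>t. pdiff \<beta> f (x + t *\<^sub>R axis i 1)) has_vector_derivative pdiff (i # \<beta>) f x) (at 0))"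

text \<open>C^k on an open set S (classical: all partials up to order k exist and are continuous).\<close>
definition Ck_on :: "nat \<Rightarrow> (real^'n::finite) set \<Rightarrow> (real^'n \<Rightarrow> 'b::real_normed_vector) \<Rightarrow> bool" where
  "Ck_on k S f \<longleftrightarrow> has_pderivs_upto S k f \<and> (\<forall>\<beta>. length \<beta> \<le> k \<longrightarrow> continuous_on S (pdiff \<beta> f))"

text \<open>C^k(closure Omega): C^k in Omega, with f continuous on the closure and all derivatives
  up to order k uniformly continuous on (bounded) Omega, i.e. continuously extendable to the closure.\<close>
definition Ck_closure :: "nat \<Rightarrow> (real^'n::finite) set \<Rightarrow> (real^'n \<Rightarrow> 'b::real_normed_vector) \<Rightarrow> bool" where
  "Ck_closure k \<Omega> f \<longleftrightarrow> continuous_on (closure \<Omega>) f \<and> has_pderivs_upto \<Omega> k f \<and>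
     (\<forall>\<beta>. length \<beta> \<le> k \<longrightarrow> uniformly_continuous_on \<Omega> (pdiff \<beta> f))"

definition Cinf_closure :: "(real^'n::finite) set \<Rightarrow> (real^'n \<Rightarrow> 'b::real_normed_vector) \<Rightarrow> bool" where
  "Cinf_closure \<Omega> f \<longleftrightarrow> (\<forall>k. Ck_closure k \<Omega> f)"

text \<open>The set of alpha-Hoelder difference quotients of g on Omega.\<close>
definition holder_quots :: "(real^'n::finite) set \<Rightarrow> real \<Rightarrow> (real^'n \<Rightarrow> 'b::real_normed_vector) \<Rightarrow> real set" where
  "holder_quots \<Omega> \<alpha> g = {norm (g x - g y) / (dist x y) powr \<alpha> | x y. x \<in> \<Omega> \<and> y \<in> \<Omega> \<and> x \<noteq> y}"

definition holder_semi :: "(real^'n::finite) set \<Rightarrow> real \<Rightarrow> (real^'n \<Rightarrow> 'b::real_normed_vector) \<Rightarrow> real" where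
  "holder_semi \<Omega> \<alpha> g = Sup (holder_quots \<Omega> \<alpha> g)"

text \<open>Hoelder space C^{k,alpha}(closure Omega).\<close>
definition holder_space :: "(real^'n::finite) set \<Rightarrow> nat \<Rightarrow> real \<Rightarrow> (real^'n \<Rightarrow> 'b::real_normed_vector) \<Rightarrow> bool" where
  "holder_space \<Omega> k \<alpha> f \<longleftrightarrow> Ck_closure k \<Omega> f \<and>
     (\<forall>\<beta>. length \<beta> = k \<longrightarrow> bdd_above (holder_quots \<Omega> \<alpha> (pdiff \<beta> f)))"

definition supnorm :: "(real^'n::finite) set \<Rightarrow> (real^'n \<Rightarrow> 'b::real_normed_vector) \<Rightarrow> real" where
  "supnorm \<Omega> g = Sup ((\<lambda>x. norm (g x)) ` \<Omega>)"

text \<open>[f]_{k,alpha}: Hoelder seminorm of the k-th order derivatives.\<close>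
definition holder_seminorm :: "(real^'n::finite) set \<Rightarrow> nat \<Rightarrow> real \<Rightarrow> (real^'n \<Rightarrow> 'b::real_normed_vector) \<Rightarrow> real" where
  "holder_seminorm \<Omega> k \<alpha> f = (\<Sum>\<beta>\<in>{\<beta>::'n list. length \<beta> = k}. holder_semi \<Omega> \<alpha> (pdiff \<beta> f))"

text \<open>||f||_{k+alpha}; ||f||_alpha is the case k = 0.\<close>
definition holder_norm :: "(real^'n::finite) set \<Rightarrow> nat \<Rightarrow> real \<Rightarrow> (real^'n \<Rightarrow> 'b::real_normed_vector) \<Rightarrow> real" where
  "holder_norm \<Omega> k \<alpha> f =
     (\<Sum>m\<le>k. \<Sum>\<beta>\<in>{\<beta>::'n list. length \<beta> = m}. supnorm \<Omega> (pdiff \<beta> f)) + holder_seminorm \<Omega> k \<alpha> f"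

text \<open>C^2 boundary via local C^2 defining functions with nonvanishing gradient.\<close>
definition C2_boundary :: "(real^'n::finite) set \<Rightarrow> bool" where
  "C2_boundary \<Omega> \<longleftrightarrow> (\<forall>x\<in>frontier \<Omega>. \<exists>r>0. \<exists>\<rho>::real^'n \<Rightarrow> real.
      Ck_on 2 (ball x r) \<rho> \<and> (\<forall>y\<in>ball x r. \<exists>i. pdir i \<rho> y \<noteq> 0) \<and>
      \<Omega> \<inter> ball x r = {y \<in> ball x r. \<rho> y < 0})"

definition tensor_sq :: "real^'n \<Rightarrow> real^'n^'n" where
  "tensor_sq \<xi> = (\<chi> i j. \<xi> $ i * \<xi> $ j)"

definition symm_part :: "real^'n^'n \<Rightarrow> real^'n^'n" where
  "symm_part B = (1/2) *\<^sub>R (B + transpose B)"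

end

theory Submission
  imports Defs
begin

lemma pdiff_append: "pdiff (\<beta> @ [i]) f = pdiff \<beta> (pdir i f)"
  by (induction \<beta>) auto

lemma ev_line:
  fixes x v :: "real^'n"
  assumes "open S" "x \<in> S"
  shows "\<forall>\<^sub>F t in nhds 0. x + t *\<^sub>R v \<in> S"
proof -
  have "((\<lambda>t::real. x + t *\<^sub>R v) \<longlongrightarrow> x + 0 *\<^sub>R v) (nhds 0)"
    by (intro tendsto_intros filterlim_ident)
  then show ?thesis using topological_tendstoD assms by fastforce
qed

lemma ev_line_at:
  fixes x v :: "real^'n"
  assumes "open S" "x \<in> S"
  shows "\<exists>T. open T \<and> (0::real) \<in> T \<and> (\<forall>t\<in>T. x + t *\<^sub>R v \<in> S)"
  using ev_line[OF assms, of v] unfolding eventually_nhds by blast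

lemma pdir_cong:
  assumes "open S" "x \<in> S" "\<And>y. y \<in> S \<Longrightarrow> f y = g y"
  shows "pdir i f x = pdir i g x"
  unfolding pdir_def
  apply (rule vector_derivative_cong_eq)
  using ev_line[OF assms(1,2), of "axis i 1"] assms(3)
  by (auto elim: eventually_mono)

lemma pdiff_cong:
  assumes "open S" "x \<in> S" "\<And>y. y \<in> S \<Longrightarrow> f y = g y"
  shows "pdiff \<beta> f x = pdiff \<beta> g x"
  using assms(2)
proof (induction \<beta> arbitrary: x)
  case Nil then show ?case using assms(3) by simp
next
  case (Cons i \<beta>)
  show ?case using pdir_cong[OF assms(1) Cons.prems, of "pdiff \<beta> f" "pdiff \<beta> g"] Cons.IH by simp
qed

lemma hvd_line_cong:
  fixes x :: "real^'n"
  assumes "((\<lambda>t. f (x + t *\<^sub>R v)) has_vector_derivative d) (at 0)"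
    "open S" "x \<in> S" "\<And>y. y \<in> S \<Longrightarrow> f y = g y"
  shows "((\<lambda>t. g (x + t *\<^sub>R v)) has_vector_derivative d) (at 0)"
proof -
  obtain T where T: "open T" "0 \<in> T" "\<forall>t\<in>T. x + t *\<^sub>R v \<in> S"
    using ev_line_at[OF assms(2,3)] by blast
  show ?thesis
    by (rule has_vector_derivative_transform_within_open[OF assms(1) T(1,2)]) (use T assms(4) in auto)
qed

lemma ucont_cong:
  fixes f g :: "'a::metric_space \<Rightarrow> 'b::metric_space"
  assumes "uniformly_continuous_on S f" "\<And>x. x \<in> S \<Longrightarrow> f x = g x"
  shows "uniformly_continuous_on S g"
  unfolding uniformly_continuous_on_def
proof (intro allI impI)
  fix e :: real assume "e > 0"
  then obtain d where d: "d > 0" "\<forall>x\<in>S. \<forall>x'\<in>S. dist x' x < d \<longrightarrow> dist (f x') (f x) < e"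
    using assms(1) unfolding uniformly_continuous_on_def by blast
  show "\<exists>d>0. \<forall>x\<in>S. \<forall>x'\<in>S. dist x' x < d \<longrightarrow> dist (g x') (g x) < e"
    by (rule exI[of _ d]) (use d assms(2) in auto)
qed

lemma holder_quots_cong:
  assumes "\<And>x. x \<in> S \<Longrightarrow> f x = g x"
  shows "holder_quots S \<alpha> f = holder_quots S \<alpha> g"
  unfolding holder_quots_def
proof (intro Collect_cong iffI)
  fix u assume "\<exists>x y. u = norm (f x - f y) / dist x y powr \<alpha> \<and> x \<in> S \<and> y \<in> S \<and> x \<noteq> y"
  then obtain x y where "u = norm (f x - f y) / dist x y powr \<alpha>" "x \<in> S" "y \<in> S" "x \<noteq> y" by blast
  then show "\<exists>x y. u = norm (g x - g y) / dist x y powr \<alpha> \<and> x \<in> S \<and> y \<in> S \<and> x \<noteq> y"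
    using assms by auto
next
  fix u assume "\<exists>x y. u = norm (g x - g y) / dist x y powr \<alpha> \<and> x \<in> S \<and> y \<in> S \<and> x \<noteq> y"
  then obtain x y where "u = norm (g x - g y) / dist x y powr \<alpha>" "x \<in> S" "y \<in> S" "x \<noteq> y" by blast
  then show "\<exists>x y. u = norm (f x - f y) / dist x y powr \<alpha> \<and> x \<in> S \<and> y \<in> S \<and> x \<noteq> y"
    using assms by (intro exI[of _ x] exI[of _ y]) auto
qed

lemma supnorm_cong:
  assumes "\<And>x. x \<in> S \<Longrightarrow> f x = g x"
  shows "supnorm S f = supnorm S g"
  unfolding supnorm_def using assms by (metis (mono_tags, lifting) image_cong)

lemma has_pderivs_upto_Suc:
  fixes f :: "real^'n::finite \<Rightarrow> 'b::real_normed_vector"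
  shows "has_pderivs_upto S (Suc k) f \<longleftrightarrow>
     has_pderivs_upto S 1 f \<and> (\<forall>i. has_pderivs_upto S k (pdir i f))"
proof
  assume H: "has_pderivs_upto S (Suc k) f"
  show "has_pderivs_upto S 1 f \<and> (\<forall>i. has_pderivs_upto S k (pdir i f))"
  proof
    show "has_pderivs_upto S 1 f" unfolding has_pderivs_upto_def
    proof (intro allI impI)
      fix \<beta> :: "'n list" and j x assume "length \<beta> < 1" "x \<in> S"
      then have "\<beta> = []" by simp
      then show "((\<lambda>t. pdiff \<beta> f (x + t *\<^sub>R axis j 1)) has_vector_derivative pdiff (j # \<beta>) f x) (at 0)"
        using H[unfolded has_pderivs_upto_def, rule_format, of "[]" x j] \<open>x \<in> S\<close> by simp
    qed
    show "\<forall>i. has_pderivs_upto S k (pdir i f)"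
      unfolding has_pderivs_upto_def
    proof (intro allI impI)
      fix i :: 'n and \<beta> :: "'n list" and j x assume "length \<beta> < k" "x \<in> S"
      then show "((\<lambda>t. pdiff \<beta> (pdir i f) (x + t *\<^sub>R axis j 1)) has_vector_derivative pdiff (j # \<beta>) (pdir i f) x) (at 0)"
        using H[unfolded has_pderivs_upto_def, rule_format, of "\<beta> @ [i]" x j]
        by (simp add: pdiff_append)
    qed
  qed
next
  assume H: "has_pderivs_upto S 1 f \<and> (\<forall>i. has_pderivs_upto S k (pdir i f))"
  show "has_pderivs_upto S (Suc k) f"
    unfolding has_pderivs_upto_def
  proof (intro allI impI)
    fix \<beta> :: "'n list" and j x assume l: "length \<beta> < Suc k" and x: "x \<in> S"
    show "((\<lambda>t. pdiff \<beta> f (x + t *\<^sub>R axis j 1)) has_vector_derivative pdiff (j # \<beta>) f x) (at 0)"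
    proof (cases \<beta> rule: rev_exhaust)
      case Nil then show ?thesis using H[THEN conjunct1, unfolded has_pderivs_upto_def, rule_format, of "[]" x j] x by simp
    next
      case (snoc \<gamma> i)
      then have "length \<gamma> < k" using l by simp
      then have "((\<lambda>t. pdiff \<gamma> (pdir i f) (x + t *\<^sub>R axis j 1)) has_vector_derivative pdiff (j # \<gamma>) (pdir i f) x) (at 0)"
        using H x unfolding has_pderivs_upto_def by blast
      then show ?thesis using snoc by (simp add: pdiff_append)
    qed
  qed
qed

definition Hs :: "(real^'n::finite) set \<Rightarrow> real \<Rightarrow> nat \<Rightarrow> (real^'n \<Rightarrow> 'b::real_normed_vector) \<Rightarrow> bool" where
  "Hs S \<alpha> k f \<longleftrightarrow> has_pderivs_upto S k f \<and> (\<forall>\<beta>. length \<beta> \<le> k \<longrightarrow> uniformly_continuous_on S (pdiff \<beta> f))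
     \<and> (\<forall>\<beta>. length \<beta> = k \<longrightarrow> bdd_above (holder_quots S \<alpha> (pdiff \<beta> f)))"

lemma holder_space_Hs: "holder_space S k \<alpha> f \<longleftrightarrow> continuous_on (closure S) f \<and> Hs S \<alpha> k f"
  unfolding holder_space_def Hs_def Ck_closure_def by auto

lemma Hs_0: "Hs S \<alpha> 0 f \<longleftrightarrow> uniformly_continuous_on S f \<and> bdd_above (holder_quots S \<alpha> f)"
  unfolding Hs_def has_pderivs_upto_def by auto

lemma Hs_Suc: "Hs S \<alpha> (Suc k) f \<longleftrightarrow>
    has_pderivs_upto S 1 f \<and> uniformly_continuous_on S f \<and> (\<forall>i. Hs S \<alpha> k (pdir i f))"
proof
  assume H: "Hs S \<alpha> (Suc k) f"
  have a: "has_pderivs_upto S 1 f" "\<forall>i. has_pderivs_upto S k (pdir i f)"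
    using H has_pderivs_upto_Suc unfolding Hs_def by blast+
  have b: "uniformly_continuous_on S f" using H[unfolded Hs_def] by (metis le0 list.size(3) pdiff.simps(1))
  have c: "uniformly_continuous_on S (pdiff \<beta> (pdir i f))" if "length \<beta> \<le> k" for \<beta> i
    using H[unfolded Hs_def, THEN conjunct2, THEN conjunct1, rule_format, of "\<beta> @ [i]"] that by (simp add: pdiff_append)
  have d: "bdd_above (holder_quots S \<alpha> (pdiff \<beta> (pdir i f)))" if "length \<beta> = k" for \<beta> i
    using H[unfolded Hs_def, THEN conjunct2, THEN conjunct2, rule_format, of "\<beta> @ [i]"] that by (simp add: pdiff_append)
  show "has_pderivs_upto S 1 f \<and> uniformly_continuous_on S f \<and> (\<forall>i. Hs S \<alpha> k (pdir i f))"
    using a b c d unfolding Hs_def by auto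
next
  assume H: "has_pderivs_upto S 1 f \<and> uniformly_continuous_on S f \<and> (\<forall>i. Hs S \<alpha> k (pdir i f))"
  have a: "has_pderivs_upto S (Suc k) f" using H has_pderivs_upto_Suc unfolding Hs_def by blast
  have b: "uniformly_continuous_on S (pdiff \<beta> f)" if "length \<beta> \<le> Suc k" for \<beta>
  proof (cases \<beta> rule: rev_exhaust)
    case Nil then show ?thesis using H by simp
  next
    case (snoc \<gamma> i)
    then have "length \<gamma> \<le> k" using that by simp
    then have "uniformly_continuous_on S (pdiff \<gamma> (pdir i f))" using H unfolding Hs_def by blast
    then show ?thesis by (simp add: snoc pdiff_append)
  qed
  have c: "bdd_above (holder_quots S \<alpha> (pdiff \<beta> f))" if "length \<beta> = Suc k" for \<beta>
  proof (cases \<beta> rule: rev_exhaust)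
    case Nil then show ?thesis using that by simp
  next
    case (snoc \<gamma> i)
    then have "length \<gamma> = k" using that by simp
    have "Hs S \<alpha> k (pdir i f)" using H by blast
    then have "bdd_above (holder_quots S \<alpha> (pdiff \<gamma> (pdir i f)))" using \<open>length \<gamma> = k\<close> unfolding Hs_def by auto
    then show ?thesis by (simp add: snoc pdiff_append)
  qed
  show "Hs S \<alpha> (Suc k) f" using a b c unfolding Hs_def by blast
qed

lemma has_pderivs_upto_cong:
  fixes f g :: "real^'n::finite \<Rightarrow> 'b::real_normed_vector"
  assumes "open S" "has_pderivs_upto S k f" "\<And>x. x \<in> S \<Longrightarrow> f x = g x"
  shows "has_pderivs_upto S k g"
  unfolding has_pderivs_upto_def
proof (intro allI impI)
  fix \<beta> :: "'n list" and i x assume l: "length \<beta> < k" and x: "x \<in> S"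
  have h: "((\<lambda>t. pdiff \<beta> f (x + t *\<^sub>R axis i 1)) has_vector_derivative pdiff (i # \<beta>) f x) (at 0)"
    using assms(2) l x unfolding has_pderivs_upto_def by blast
  have eq: "pdiff (i # \<beta>) f x = pdiff (i # \<beta>) g x" by (rule pdiff_cong[OF assms(1) x assms(3)])
  have "((\<lambda>t. pdiff \<beta> g (x + t *\<^sub>R axis i 1)) has_vector_derivative pdiff (i # \<beta>) f x) (at 0)"
    by (rule hvd_line_cong[OF h assms(1) x]) (rule pdiff_cong[OF assms(1) _ assms(3)])
  then show "((\<lambda>t. pdiff \<beta> g (x + t *\<^sub>R axis i 1)) has_vector_derivative pdiff (i # \<beta>) g x) (at 0)"
    using eq by simp
qed

lemma Hs_cong:
  assumes "open S" "Hs S \<alpha> k f" "\<And>x. x \<in> S \<Longrightarrow> f x = g x"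
  shows "Hs S \<alpha> k g"
proof -
  have e: "\<And>\<beta> x. x \<in> S \<Longrightarrow> pdiff \<beta> f x = pdiff \<beta> g x" by (rule pdiff_cong[OF assms(1) _ assms(3)])
  have "has_pderivs_upto S k g"
    by (rule has_pderivs_upto_cong[OF assms(1), of k f]) (use assms in \<open>auto simp: Hs_def\<close>)
  moreover have "uniformly_continuous_on S (pdiff \<beta> g)" if "length \<beta> \<le> k" for \<beta>
    using assms(2) that ucont_cong[of S "pdiff \<beta> f" "pdiff \<beta> g", OF _ e] unfolding Hs_def by blast
  moreover have "bdd_above (holder_quots S \<alpha> (pdiff \<beta> g))" if "length \<beta> = k" for \<beta>
    using assms(2) that holder_quots_cong[of S "pdiff \<beta> f" "pdiff \<beta> g", OF e] unfolding Hs_def by auto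
  ultimately show ?thesis unfolding Hs_def by blast
qed

lemma pdir_eq:
  fixes x :: "real^'n::finite"
  assumes "((\<lambda>t. f (x + t *\<^sub>R axis i 1)) has_vector_derivative d) (at 0)"
  shows "pdir i f x = d"
  unfolding pdir_def using vector_derivative_at[OF assms] .

lemma Hs_SucI:
  fixes f :: "real^'n::finite \<Rightarrow> 'b::real_normed_vector"
  assumes "open S"
    and "\<And>i x. x \<in> S \<Longrightarrow> ((\<lambda>t. f (x + t *\<^sub>R axis i 1)) has_vector_derivative F' i x) (at 0)"
    and "uniformly_continuous_on S f" and "\<And>i. Hs S \<alpha> k (F' i)"
  shows "Hs S \<alpha> (Suc k) f"
  unfolding Hs_Suc
proof (intro conjI allI)
  show "has_pderivs_upto S 1 f" unfolding has_pderivs_upto_def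
  proof (intro allI impI)
    fix \<beta> :: "'n list" and i x assume "length \<beta> < 1" "x \<in> S"
    then show "((\<lambda>t. pdiff \<beta> f (x + t *\<^sub>R axis i 1)) has_vector_derivative pdiff (i # \<beta>) f x) (at 0)"
      using assms(2) pdir_eq[OF assms(2)] by auto
  qed
  show "uniformly_continuous_on S f" by fact
  fix i show "Hs S \<alpha> k (pdir i f)"
    by (rule Hs_cong[OF assms(1) assms(4)[of i]]) (use pdir_eq[OF assms(2)] in auto)
qed

lemma Hs_SucD:
  fixes x :: "real^'n::finite"
  assumes "Hs S \<alpha> (Suc k) f" "x \<in> S"
  shows "((\<lambda>t. f (x + t *\<^sub>R axis i 1)) has_vector_derivative pdir i f x) (at 0)"
  using assms unfolding Hs_Suc has_pderivs_upto_def by force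

lemma line_shift:
  fixes F :: "real^'n::finite \<Rightarrow> 'b::real_normed_vector"
  assumes "((\<lambda>\<tau>. F (w + \<tau> *\<^sub>R u)) has_vector_derivative d) (at 0)"
    and "w = z + t *\<^sub>R (m *\<^sub>R u)"
  shows "((\<lambda>s. F (z + s *\<^sub>R (m *\<^sub>R u))) has_vector_derivative (m *\<^sub>R d)) (at t)"
proof -
  have i: "((\<lambda>s. m * (s - t)) has_vector_derivative m) (at t)"
    unfolding has_real_derivative_iff_has_vector_derivative[symmetric]
    by (auto intro!: derivative_eq_intros)
  have o: "((\<lambda>\<tau>. F (w + \<tau> *\<^sub>R u)) has_vector_derivative d) (at ((\<lambda>s. m * (s - t)) t))"
    using assms(1) by simp
  have e: "((\<lambda>\<tau>. F (w + \<tau> *\<^sub>R u)) \<circ> (\<lambda>s. m * (s - t))) = (\<lambda>s. F (z + s *\<^sub>R (m *\<^sub>R u)))"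
  proof
    fix s
    have "w + (m * (s - t)) *\<^sub>R u = z + s *\<^sub>R (m *\<^sub>R u)"
      unfolding assms(2) by (simp add: algebra_simps)
    then show "((\<lambda>\<tau>. F (w + \<tau> *\<^sub>R u)) \<circ> (\<lambda>s. m * (s - t))) s = F (z + s *\<^sub>R (m *\<^sub>R u))" by simp
  qed
  show ?thesis using vector_diff_chain_at[OF i o] unfolding e .
qed

lemma seg_bound:
  fixes f :: "real^'n::finite \<Rightarrow> 'b::real_normed_vector"
  assumes deriv: "\<And>w. w \<in> S \<Longrightarrow> ((\<lambda>t. f (w + t *\<^sub>R axis i 1)) has_vector_derivative pdir i f w) (at 0)"
    and bnd: "\<And>w. w \<in> S \<Longrightarrow> norm (pdir i f w) \<le> L"
    and seg: "\<And>t. t \<in> closed_segment 0 \<delta> \<Longrightarrow> w + t *\<^sub>R axis i 1 \<in> S"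
  shows "norm (f (w + \<delta> *\<^sub>R axis i 1) - f w) \<le> L * \<bar>\<delta>\<bar>"
proof -
  let ?\<phi> = "\<lambda>t. f (w + t *\<^sub>R axis i 1)"
  have d: "(?\<phi> has_vector_derivative pdir i f (w + t *\<^sub>R axis i 1)) (at t)"
    if "t \<in> closed_segment 0 \<delta>" for t
  proof -
    have "((\<lambda>s. f (w + s *\<^sub>R (1 *\<^sub>R axis i 1))) has_vector_derivative 1 *\<^sub>R pdir i f (w + t *\<^sub>R axis i 1)) (at t)"
      by (rule line_shift[OF deriv[OF seg[OF that]]]) simp
    then show ?thesis by simp
  qed
  have "norm (?\<phi> \<delta> - ?\<phi> 0) \<le> L * norm (\<delta> - 0)"
  proof (rule differentiable_bound[of "closed_segment 0 \<delta>" ?\<phi> "\<lambda>t h. h *\<^sub>R pdir i f (w + t *\<^sub>R axis i 1)" L])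
    show "convex (closed_segment 0 \<delta>)" by simp
    fix t assume t: "t \<in> closed_segment 0 \<delta>"
    show "(?\<phi> has_derivative (\<lambda>h. h *\<^sub>R pdir i f (w + t *\<^sub>R axis i 1))) (at t within closed_segment 0 \<delta>)"
      using d[OF t] unfolding has_vector_derivative_def by (rule has_derivative_at_withinI)
    have "onorm (\<lambda>h::real. h *\<^sub>R pdir i f (w + t *\<^sub>R axis i 1)) = norm (pdir i f (w + t *\<^sub>R axis i 1))"
      using onorm_scaleR_left[of "\<lambda>h::real. h" "pdir i f (w + t *\<^sub>R axis i 1)"] by (simp add: onorm_id)
    then show "onorm (\<lambda>h::real. h *\<^sub>R pdir i f (w + t *\<^sub>R axis i 1)) \<le> L"
      using bnd[OF seg[OF t]] by simp
  qed auto
  then show ?thesis by simp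
qed

definition inbox :: "real^'n::finite \<Rightarrow> real^'n \<Rightarrow> real^'n \<Rightarrow> bool" where
  "inbox x y w \<longleftrightarrow> (\<forall>i. min (x$i) (y$i) \<le> w$i \<and> w$i \<le> max (x$i) (y$i))"

lemma box_bound:
  fixes f :: "real^'n::finite \<Rightarrow> 'b::real_normed_vector"
  assumes deriv: "\<And>w i. w \<in> S \<Longrightarrow> ((\<lambda>t. f (w + t *\<^sub>R axis i 1)) has_vector_derivative pdir i f w) (at 0)"
    and bnd: "\<And>w i. w \<in> S \<Longrightarrow> norm (pdir i f w) \<le> L"
    and box: "\<And>w. inbox x y w \<Longrightarrow> w \<in> S"
  shows "norm (f y - f x) \<le> L * (\<Sum>i\<in>UNIV. \<bar>y$i - x$i\<bar>)"
proof -
  define z where "z J = (\<chi> k. if k \<in> J then y$k else x$k)" for J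
  have inb: "z J + t *\<^sub>R axis i 1 \<in> S" if "i \<notin> J" "t \<in> closed_segment 0 (y$i - x$i)" for J i t
  proof (rule box, unfold inbox_def, rule allI)
    fix k
    show "min (x$k) (y$k) \<le> (z J + t *\<^sub>R axis i 1)$k \<and> (z J + t *\<^sub>R axis i 1)$k \<le> max (x$k) (y$k)"
      using that by (auto simp: z_def axis_def closed_segment_eq_real_ivl split: if_splits)
  qed
  have zi: "z (insert i J) = z J + (y$i - x$i) *\<^sub>R axis i 1" if "i \<notin> J" for i J
    using that by (auto simp: z_def axis_def vec_eq_iff)
  have main: "norm (f (z J) - f x) \<le> L * (\<Sum>k\<in>J. \<bar>y$k - x$k\<bar>)" for J
  proof -
    have "finite J" by simp
    then show ?thesis
    proof (induction rule: finite_induct)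
      case empty
      have "z {} = x" by (simp add: z_def vec_eq_iff)
      then show ?case by simp
    next
      case (insert i J)
      have "norm (f (z J + (y$i - x$i) *\<^sub>R axis i 1) - f (z J)) \<le> L * \<bar>y$i - x$i\<bar>"
        by (rule seg_bound[where S=S and i=i and f=f and L=L]) (use deriv bnd inb insert.hyps in auto)
      then have a: "norm (f (z (insert i J)) - f (z J)) \<le> L * \<bar>y$i - x$i\<bar>"
        using zi[OF insert.hyps(2)] by simp
      have t: "norm (f (z (insert i J)) - f x) \<le> norm (f (z (insert i J)) - f (z J)) + norm (f (z J) - f x)"
        using norm_triangle_ineq[of "f (z (insert i J)) - f (z J)" "f (z J) - f x"] by simp
      have "norm (f (z (insert i J)) - f x) \<le> L * \<bar>y$i - x$i\<bar> + L * (\<Sum>k\<in>J. \<bar>y$k - x$k\<bar>)"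
        using a t insert.IH by linarith
      then show ?case using insert.hyps by (simp add: distrib_left)
    qed
  qed
  have "z UNIV = y" by (simp add: z_def vec_eq_iff)
  then show ?thesis using main[of UNIV] by simp
qed

lemma bounded_family:
  fixes g :: "'i::finite \<Rightarrow> 'a \<Rightarrow> 'b::real_normed_vector"
  assumes "\<And>i. bounded (g i ` K)"
  shows "\<exists>L\<ge>0. \<forall>i. \<forall>w\<in>K. norm (g i w) \<le> L"
proof -
  have "\<forall>i. \<exists>B. \<forall>w\<in>K. norm (g i w) \<le> B" using assms unfolding bounded_iff by blast
  then obtain B where B: "\<And>i w. w \<in> K \<Longrightarrow> norm (g i w) \<le> B i" by metis
  have "norm (g i w) \<le> (\<Sum>j\<in>UNIV. \<bar>B j\<bar>)" if "w \<in> K" for i w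
  proof -
    have "\<bar>B i\<bar> \<le> (\<Sum>j\<in>UNIV. \<bar>B j\<bar>)" by (rule member_le_sum) auto
    then show ?thesis using B[OF that, of i] by linarith
  qed
  moreover have "(\<Sum>j\<in>UNIV. \<bar>B j\<bar>) \<ge> 0" by (simp add: sum_nonneg)
  ultimately show ?thesis by blast
qed

lemma inbox_sum:
  assumes "inbox x y w"
  shows "(\<Sum>i\<in>UNIV. \<bar>w$i - x$i\<bar>) \<le> (\<Sum>i\<in>UNIV. \<bar>y$i - x$i\<bar>)"
proof (rule sum_mono)
  fix i
  have "min (x$i) (y$i) \<le> w$i \<and> w$i \<le> max (x$i) (y$i)" using assms unfolding inbox_def by blast
  then show "\<bar>w$i - x$i\<bar> \<le> \<bar>y$i - x$i\<bar>" by (auto simp: min_def max_def split: if_splits)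
qed

lemma inbox_trans:
  assumes "inbox x y w" "inbox x w u"
  shows "inbox x y u"
  unfolding inbox_def
proof
  fix i
  have "min (x$i) (y$i) \<le> w$i \<and> w$i \<le> max (x$i) (y$i)" "min (x$i) (w$i) \<le> u$i \<and> u$i \<le> max (x$i) (w$i)"
    using assms unfolding inbox_def by blast+
  then show "min (x$i) (y$i) \<le> u$i \<and> u$i \<le> max (x$i) (y$i)" by (auto simp: min_def max_def split: if_splits)
qed

lemma norm_le_sum_abs:
  fixes w x :: "real^'n::finite"
  shows "norm (w - x) \<le> (\<Sum>i\<in>UNIV. \<bar>w$i - x$i\<bar>)"
  using norm_le_l1_cart[of "w - x"] by simp

lemma sum_abs_le_card:
  fixes x y :: "real^'n::finite"
  shows "(\<Sum>i\<in>UNIV. \<bar>y$i - x$i\<bar>) \<le> real CARD('n) * dist x y"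
proof -
  have "(\<Sum>i\<in>UNIV. \<bar>y$i - x$i\<bar>) \<le> of_nat (card (UNIV::'n set)) * dist x y"
  proof (rule sum_bounded_above)
    fix i
    show "\<bar>y$i - x$i\<bar> \<le> dist x y" using component_le_norm_cart[of "y - x" i]
      by (simp add: dist_norm norm_minus_commute)
  qed
  then show ?thesis by simp
qed

lemma tri3:
  fixes a b c :: "'a::real_normed_vector"
  shows "norm (a - c) \<le> norm (a - b) + norm (b - c)"
  using norm_triangle_ineq[of "a - b" "b - c"] by simp

lemma bdry_local:
  fixes f :: "real^'n::finite \<Rightarrow> 'b::real_normed_vector" and \<rho> :: "real^'n \<Rightarrow> real"
  assumes "r > 0" and rho: "Ck_on 2 (ball p r) \<rho>" and grad: "\<forall>y\<in>ball p r. \<exists>i. pdir i \<rho> y \<noteq> 0"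
    and loc: "\<Omega> \<inter> ball p r = {y \<in> ball p r. \<rho> y < 0}"
    and derf: "\<And>w i. w \<in> \<Omega> \<Longrightarrow> ((\<lambda>t. f (w + t *\<^sub>R axis i 1)) has_vector_derivative pdir i f w) (at 0)"
    and bndf: "\<And>w i. w \<in> \<Omega> \<Longrightarrow> norm (pdir i f w) \<le> Lg" and Lg: "Lg \<ge> 0"
  shows "\<exists>r1>0. \<exists>A. \<forall>x\<in>\<Omega> \<inter> ball p r1. \<forall>y\<in>\<Omega> \<inter> ball p r1. norm (f x - f y) \<le> A * dist x y"
proof -
  have derr: "((\<lambda>t. \<rho> (w + t *\<^sub>R axis i 1)) has_vector_derivative pdir i \<rho> w) (at 0)"
    if "w \<in> ball p r" for w i
    using rho[unfolded Ck_on_def has_pderivs_upto_def, THEN conjunct1, rule_format, of "[]" w i] that by simp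
  have contr: "continuous_on (ball p r) (pdir i \<rho>)" for i
    using rho[unfolded Ck_on_def, THEN conjunct2, rule_format, of "[i]"] by simp
  have locI: "w \<in> \<Omega>" if "w \<in> ball p r" "\<rho> w < 0" for w
  proof -
    have "w \<in> {y \<in> ball p r. \<rho> y < 0}" using that by simp
    then have "w \<in> \<Omega> \<inter> ball p r" unfolding loc .
    then show ?thesis by simp
  qed
  have locD: "\<rho> w < 0" if "w \<in> \<Omega>" "w \<in> ball p r" for w
  proof -
    have "w \<in> \<Omega> \<inter> ball p r" using that by simp
    then have "w \<in> {y \<in> ball p r. \<rho> y < 0}" unfolding loc .
    then show ?thesis by simp
  qed
  have pin: "p \<in> ball p r" using \<open>r > 0\<close> by simp
  then obtain k where k: "pdir k \<rho> p \<noteq> 0" using grad by blast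
  define a where "a = pdir k \<rho> p"
  define c where "c = \<bar>a\<bar> / 2"
  define \<sigma> where "\<sigma> = (if a > 0 then -1 else (1::real))"
  have c0: "c > 0" using k by (simp add: c_def a_def)
  have sig2: "\<sigma> * \<sigma> = 1" by (simp add: \<sigma>_def)
  have "isCont (pdir k \<rho>) p" using contr[of k] continuous_on_eq_continuous_at[of "ball p r" "pdir k \<rho>"] pin by auto
  then obtain r2 where r2: "r2 > 0" "\<And>w. dist w p < r2 \<Longrightarrow> dist (pdir k \<rho> w) a < c"
    unfolding continuous_at_eps_delta a_def using c0 by blast
  have sig: "\<sigma> * pdir k \<rho> w \<le> - c" if "dist w p < r2" for w
    using r2(2)[OF that] k unfolding \<sigma>_def c_def dist_real_def by (auto simp: abs_if split: if_splits)
  define r0 where "r0 = min r2 (r/2)"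
  have r0: "r0 > 0" "r0 \<le> r2" "r0 < r" using r2 \<open>r > 0\<close> by (auto simp: r0_def)
  have cb: "cball p r0 \<subseteq> ball p r" using r0 by auto
  have "\<exists>L\<ge>0. \<forall>i. \<forall>w\<in>cball p r0. norm (pdir i \<rho> w) \<le> L"
    by (rule bounded_family, rule compact_imp_bounded, rule compact_continuous_image)
      (use continuous_on_subset[OF contr cb] in auto)
  then obtain Lr where Lr: "Lr \<ge> 0" "\<And>i w. w \<in> cball p r0 \<Longrightarrow> norm (pdir i \<rho> w) \<le> Lr" by blast
  define n where "n = real CARD('n)"
  have n: "n \<ge> 1" unfolding n_def by simp
  define A0 where "A0 = n * Lr / c + 1"
  have A0: "A0 \<ge> 1" "c * A0 = n * Lr + c" using c0 Lr n by (auto simp: A0_def field_simps)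
  define r1 where "r1 = r0 / (1 + 2*A0 + 2*n)"
  have r1: "r1 > 0" "r1 * (1 + 2*A0 + 2*n) = r0" using r0 A0 n by (auto simp: r1_def)
  have r1e: "r1 + 2 * (A0 * r1) + 2 * (n * r1) = r0" using r1(2) by (simp add: algebra_simps)
  have nr1: "n * r1 \<ge> 0" "A0 * r1 \<ge> 0" using n r1 A0 by auto
  have r1r: "r1 < r" using r1e nr1 r0 by linarith
  define v where "v = \<sigma> *\<^sub>R axis k (1::real)"
  have nv: "norm v = 1" by (simp add: v_def \<sigma>_def)
  have key: "\<forall>x\<in>\<Omega> \<inter> ball p r1. \<forall>y\<in>\<Omega> \<inter> ball p r1. norm (f x - f y) \<le> Lg * (2*A0 + n) * dist x y"
  proof (intro ballI)
    fix x y assume x: "x \<in> \<Omega> \<inter> ball p r1" and y: "y \<in> \<Omega> \<inter> ball p r1"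
    show "norm (f x - f y) \<le> Lg * (2*A0 + n) * dist x y"
    proof (cases "x = y")
      case True then show ?thesis by simp
    next
      case False
      define d where "d = dist x y"
      have d: "d > 0" "d < 2 * r1" using False x y dist_triangle[of x y p]
        by (auto simp: d_def dist_commute)
      define s where "s = A0 * d"
      have s: "s \<ge> 0" "s < 2 * (A0 * r1)" using d A0 by (auto simp: s_def)
      have nd: "n * d < 2 * (n * r1)" using d n by auto
      have push: "q + t *\<^sub>R v \<in> \<Omega> \<and> \<rho> (q + t *\<^sub>R v) \<le> \<rho> q - c * t \<and> dist p (q + t *\<^sub>R v) < r1 + s"
        if q: "q \<in> \<Omega> \<inter> ball p r1" and t: "0 \<le> t" "t \<le> s" for q t
      proof -
        have dq: "dist p (q + \<tau> *\<^sub>R v) < r1 + s" if "0 \<le> \<tau>" "\<tau> \<le> s" for \<tau>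
        proof -
          have "dist p (q + \<tau> *\<^sub>R v) \<le> dist p q + norm (\<tau> *\<^sub>R v)"
            by (metis dist_norm dist_triangle2 add_diff_cancel_left' norm_minus_commute)
          then show ?thesis using q that nv by auto
        qed
        have inb: "dist p (q + \<tau> *\<^sub>R v) < r0" if "0 \<le> \<tau>" "\<tau> \<le> s" for \<tau>
          using dq[OF that] s r1e nr1 by linarith
        have qin: "q \<in> ball p r" using q r1r by auto
        have rq: "\<rho> q < 0" using q qin locD by blast
        have "(\<lambda>\<tau>. \<rho> (q + \<tau> *\<^sub>R v) + c * \<tau>) t \<le> (\<lambda>\<tau>. \<rho> (q + \<tau> *\<^sub>R v) + c * \<tau>) 0"
        proof (rule DERIV_nonpos_imp_nonincreasing[OF t(1)])
          fix \<tau> assume \<tau>: "0 \<le> \<tau>" "\<tau> \<le> t"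
          have w: "q + \<tau> *\<^sub>R v \<in> ball p r" using inb[of \<tau>] \<tau> t r0 by (auto simp: dist_commute)
          have "((\<lambda>s. \<rho> (q + s *\<^sub>R (\<sigma> *\<^sub>R axis k 1))) has_vector_derivative \<sigma> *\<^sub>R pdir k \<rho> (q + \<tau> *\<^sub>R v)) (at \<tau>)"
            by (rule line_shift[OF derr[OF w]]) (simp add: v_def)
          then have "((\<lambda>s. \<rho> (q + s *\<^sub>R v)) has_real_derivative \<sigma> * pdir k \<rho> (q + \<tau> *\<^sub>R v)) (at \<tau>)"
            unfolding has_real_derivative_iff_has_vector_derivative v_def by simp
          then have "((\<lambda>s. \<rho> (q + s *\<^sub>R v) + c * s) has_real_derivative \<sigma> * pdir k \<rho> (q + \<tau> *\<^sub>R v) + c) (at \<tau>)"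
            by (auto intro!: derivative_eq_intros)
          moreover have "\<sigma> * pdir k \<rho> (q + \<tau> *\<^sub>R v) + c \<le> 0"
            using sig[of "q + \<tau> *\<^sub>R v"] inb[of \<tau>] \<tau> t r0 by (auto simp: dist_commute)
          ultimately show "\<exists>y. ((\<lambda>\<tau>. \<rho> (q + \<tau> *\<^sub>R v) + c * \<tau>) has_real_derivative y) (at \<tau>) \<and> y \<le> 0"
            by blast
        qed
        then have le: "\<rho> (q + t *\<^sub>R v) \<le> \<rho> q - c * t" by simp
        have "q + t *\<^sub>R v \<in> ball p r" using inb[OF t] r0 by auto
        moreover have "\<rho> (q + t *\<^sub>R v) < 0" using le rq c0 t by (smt (verit) mult_nonneg_nonneg)
        ultimately have "q + t *\<^sub>R v \<in> \<Omega>" using locI by blast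
        then show ?thesis using le dq[OF t] by blast
      qed
      have segf: "norm (f (q + s *\<^sub>R v) - f q) \<le> Lg * s" if q: "q \<in> \<Omega> \<inter> ball p r1" for q
      proof -
        have "norm (f (q + (\<sigma> * s) *\<^sub>R axis k 1) - f q) \<le> Lg * \<bar>\<sigma> * s\<bar>"
        proof (rule seg_bound[where S=\<Omega> and i=k and f=f and L=Lg])
          fix t assume t: "t \<in> closed_segment 0 (\<sigma> * s)"
          have "0 \<le> \<sigma> * t \<and> \<sigma> * t \<le> s" using t s unfolding closed_segment_eq_real_ivl \<sigma>_def
            by (auto split: if_splits)
          then have "q + (\<sigma> * t) *\<^sub>R v \<in> \<Omega>" using push[OF q] by blast
          moreover have "(\<sigma> * t) *\<^sub>R v = t *\<^sub>R axis k 1" using sig2 by (simp add: v_def)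
          ultimately show "q + t *\<^sub>R axis k 1 \<in> \<Omega>" by simp
        qed (use derf bndf in auto)
        moreover have "\<bar>\<sigma> * s\<bar> = s" using s by (simp add: \<sigma>_def)
        moreover have "q + (\<sigma> * s) *\<^sub>R axis k 1 = q + s *\<^sub>R v" by (simp add: v_def)
        ultimately show ?thesis by simp
      qed
      define x' where "x' = x + s *\<^sub>R v"
      define y' where "y' = y + s *\<^sub>R v"
      have sumd: "(\<Sum>i\<in>UNIV. \<bar>y'$i - x'$i\<bar>) \<le> n * d"
        using sum_abs_le_card[of y x] by (simp add: x'_def y'_def n_def d_def)
      have x'p: "dist p x' < r1 + s" using push[OF x, of s] s by (simp add: x'_def)
      have rx': "\<rho> x' \<le> \<rho> x - c * s" using push[OF x, of s] s by (simp add: x'_def)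
      have rx: "\<rho> x < 0" using x r1r locD by auto
      have boxw: "dist p w < r0" if "inbox x' y' w" for w
      proof -
        have "norm (w - x') \<le> n * d" using norm_le_sum_abs[of w x'] inbox_sum[OF that] sumd by linarith
        then have "dist p w \<le> dist p x' + n * d"
          by (metis dist_norm dist_triangle2 dual_order.trans add_le_cancel_left norm_minus_commute)
        then show ?thesis using x'p nd s r1e nr1 by linarith
      qed
      have boxO: "w \<in> \<Omega>" if w: "inbox x' y' w" for w
      proof -
        have "norm (\<rho> w - \<rho> x') \<le> Lr * (\<Sum>i\<in>UNIV. \<bar>w$i - x'$i\<bar>)"
        proof (rule box_bound[where S="ball p r0" and f=\<rho> and L=Lr])
          fix u assume "inbox x' w u"
          then have "inbox x' y' u" using inbox_trans[OF w] by blast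
          then show "u \<in> ball p r0" using boxw by auto
        qed (use derr cb Lr r0 in auto)
        also have "\<dots> \<le> Lr * (n * d)"
          using inbox_sum[OF w] sumd Lr(1) by (meson mult_left_mono order_trans)
        finally have "\<rho> w \<le> \<rho> x' + Lr * (n * d)" by auto
        also have "\<dots> < 0"
        proof -
          have "c * s = (c * A0) * d" by (simp add: s_def)
          also have "\<dots> = (n * Lr + c) * d" using A0(2) by simp
          finally have "c * s = Lr * (n * d) + c * d" by (simp add: algebra_simps)
          moreover have "c * d > 0" using c0 d by simp
          ultimately show ?thesis using rx' rx by linarith
        qed
        finally have "\<rho> w < 0" .
        moreover have "w \<in> ball p r" using boxw[OF w] r0 by auto
        ultimately show ?thesis using locI by blast
      qed
      have "norm (f y' - f x') \<le> Lg * (\<Sum>i\<in>UNIV. \<bar>y'$i - x'$i\<bar>)"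
        by (rule box_bound[where S=\<Omega> and f=f and L=Lg]) (use derf bndf boxO in auto)
      also have "\<dots> \<le> Lg * (n * d)" using sumd Lg by (simp add: mult_left_mono)
      finally have mid: "norm (f y' - f x') \<le> Lg * (n * d)" .
      have ex: "norm (f x' - f x) \<le> Lg * s" using segf[OF x] by (simp add: x'_def)
      have ey: "norm (f y' - f y) \<le> Lg * s" using segf[OF y] by (simp add: y'_def)
      have "norm (f x - f y) \<le> norm (f x' - f x) + norm (f y' - f x') + norm (f y' - f y)"
      proof -
        have "norm (f x - f y) \<le> norm (f x - f x') + norm (f x' - f y)" by (rule tri3)
        moreover have "norm (f x' - f y) \<le> norm (f x' - f y') + norm (f y' - f y)" by (rule tri3)
        moreover have "norm (f x - f x') = norm (f x' - f x)" by (rule norm_minus_commute)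
        moreover have "norm (f x' - f y') = norm (f y' - f x')" by (rule norm_minus_commute)
        ultimately show "norm (f x - f y) \<le> norm (f x' - f x) + norm (f y' - f x') + norm (f y' - f y)" by linarith
      qed
      also have "\<dots> \<le> Lg * s + Lg * (n * d) + Lg * s" using ex ey mid by linarith
      also have "\<dots> = Lg * (2*A0 + n) * dist x y" by (simp add: s_def d_def algebra_simps)
      finally show ?thesis .
    qed
  qed
  show ?thesis using key r1 by blast
qed

lemma C1_holder:
  fixes f :: "real^'n::finite \<Rightarrow> 'b::euclidean_space"
  assumes op: "open \<Omega>" and bd: "bounded \<Omega>" and c2: "C2_boundary \<Omega>" and al: "0 \<le> \<alpha>" "\<alpha> \<le> 1"
    and hp: "has_pderivs_upto \<Omega> 1 f" and uf: "uniformly_continuous_on \<Omega> f"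
    and ud: "\<And>i. uniformly_continuous_on \<Omega> (pdir i f)"
  shows "bdd_above (holder_quots \<Omega> \<alpha> f)"
proof -
  have derf: "((\<lambda>t. f (w + t *\<^sub>R axis i 1)) has_vector_derivative pdir i f w) (at 0)"
    if "w \<in> \<Omega>" for w i
    using hp[unfolded has_pderivs_upto_def, rule_format, of "[]" w i] that by simp
  have bdi: "bounded (pdir i f ` \<Omega>)" for i by (rule bounded_uniformly_continuous_image[OF ud bd])
  obtain Lg where Lg: "Lg \<ge> 0" "\<And>i w. w \<in> \<Omega> \<Longrightarrow> norm (pdir i f w) \<le> Lg"
    using bounded_family[of "\<lambda>i. pdir i f" \<Omega>] bdi by blast
  obtain Sf1 where Sf1: "\<And>w. w \<in> \<Omega> \<Longrightarrow> norm (f w) \<le> Sf1"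
    using bounded_uniformly_continuous_image[OF uf bd] unfolding bounded_iff by blast
  define Sf where "Sf = \<bar>Sf1\<bar>"
  have Sf: "\<And>w. w \<in> \<Omega> \<Longrightarrow> norm (f w) \<le> Sf" using Sf1 unfolding Sf_def by force
  have Sf0: "Sf \<ge> 0" unfolding Sf_def by simp
  define n where "n = real CARD('n)"
  have n: "n \<ge> 1" unfolding n_def by simp
  have loc: "\<exists>r1>0. \<exists>A. \<forall>x\<in>\<Omega> \<inter> ball p r1. \<forall>y\<in>\<Omega> \<inter> ball p r1. norm (f x - f y) \<le> A * dist x y"
    if p: "p \<in> closure \<Omega>" for p
  proof (cases "p \<in> \<Omega>")
    case True
    obtain r0 where r0: "r0 > 0" "ball p r0 \<subseteq> \<Omega>" using op True open_contains_ball by blast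
    define r1 where "r1 = r0 / (2 * n + 1)"
    have r1: "r1 > 0" "r1 * (2 * n + 1) = r0" using r0 n by (auto simp: r1_def)
    have key: "norm (f x - f y) \<le> Lg * n * dist x y" if x: "x \<in> ball p r1" and y: "y \<in> ball p r1" for x y
    proof -
      have dxy: "dist x y < 2 * r1" using x y dist_triangle[of x y p] by (auto simp: dist_commute)
      have "norm (f y - f x) \<le> Lg * (\<Sum>i\<in>UNIV. \<bar>y$i - x$i\<bar>)"
      proof (rule box_bound[where S=\<Omega> and f=f and L=Lg])
        fix w assume w: "inbox x y w"
        have "norm (w - x) \<le> n * dist x y"
          using norm_le_sum_abs[of w x] inbox_sum[OF w] sum_abs_le_card[of y x] by (simp add: n_def)
        moreover have "n * dist x y < n * (2 * r1)" using dxy n by simp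
        moreover have "dist p w \<le> dist p x + norm (w - x)"
          by (metis dist_norm dist_triangle2 norm_minus_commute)
        ultimately have "dist p w < r0" using x r1 by (simp add: algebra_simps)
        then show "w \<in> \<Omega>" using r0 by auto
      qed (use derf Lg in auto)
      also have "\<dots> \<le> Lg * (n * dist x y)"
        using sum_abs_le_card[of y x] Lg(1) by (simp add: mult_left_mono n_def)
      finally show ?thesis by (simp add: norm_minus_commute mult.assoc)
    qed
    show ?thesis using key r1 by blast
  next
    case False
    then have "p \<in> frontier \<Omega>" using p op by (simp add: frontier_def interior_open)
    then obtain r and \<rho> :: "real^'n \<Rightarrow> real" where r: "r > 0" "Ck_on 2 (ball p r) \<rho>" "\<forall>y\<in>ball p r. \<exists>i. pdir i \<rho> y \<noteq> 0"
      "\<Omega> \<inter> ball p r = {y \<in> ball p r. \<rho> y < 0}"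
      using c2 unfolding C2_boundary_def by blast
    show ?thesis by (rule bdry_local[OF r derf Lg(2) Lg(1)])
  qed
  then obtain R A where RA: "\<And>p. p \<in> closure \<Omega> \<Longrightarrow> R p > 0"
    "\<And>p x y. p \<in> closure \<Omega> \<Longrightarrow> x \<in> \<Omega> \<inter> ball p (R p) \<Longrightarrow> y \<in> \<Omega> \<inter> ball p (R p) \<Longrightarrow> norm (f x - f y) \<le> A p * dist x y"
    by metis
  have cpt: "compact (closure \<Omega>)" using bd bounded_closure by (simp add: compact_eq_bounded_closed)
  obtain C' where C': "C' \<subseteq> closure \<Omega>" "finite C'" "closure \<Omega> \<subseteq> (\<Union>p\<in>C'. ball p (R p))"
  proof (rule compactE_image[OF cpt, of "closure \<Omega>" "\<lambda>p. ball p (R p)"])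
    show "closure \<Omega> \<subseteq> (\<Union>p\<in>closure \<Omega>. ball p (R p))" using RA(1) by force
  qed auto
  obtain \<epsilon> where eps: "\<epsilon> > 0" "\<And>x. x \<in> closure \<Omega> \<Longrightarrow> \<exists>G\<in>(\<lambda>p. ball p (R p)) ` C'. ball x \<epsilon> \<subseteq> G"
    by (rule Heine_Borel_lemma[OF cpt, of "(\<lambda>p. ball p (R p)) ` C'"]) (use C'(3) in auto)
  define Am where "Am = (\<Sum>p\<in>C'. \<bar>A p\<bar>)"
  have Am: "Am \<ge> 0" "\<And>p. p \<in> C' \<Longrightarrow> A p \<le> Am"
  proof -
    show "Am \<ge> 0" unfolding Am_def by (simp add: sum_nonneg)
    fix p assume "p \<in> C'"
    then have "\<bar>A p\<bar> \<le> Am" unfolding Am_def by (intro member_le_sum) (auto simp: C'(2))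
    then show "A p \<le> Am" by linarith
  qed
  define e where "e = min \<epsilon> 1"
  have e: "e > 0" "e \<le> 1" "e \<le> \<epsilon>" using eps by (auto simp: e_def)
  define M where "M = Am + 2 * Sf / e powr \<alpha>"
  have quot: "norm (f x - f y) / dist x y powr \<alpha> \<le> M" if x: "x \<in> \<Omega>" and y: "y \<in> \<Omega>" and xy: "x \<noteq> y" for x y
  proof -
    define d where "d = dist x y"
    have d: "d > 0" using xy by (simp add: d_def)
    have dpos: "d powr \<alpha> > 0" using d by simp
    have t2: "2 * Sf / e powr \<alpha> \<ge> 0" using Sf0 by simp
    show ?thesis
    proof (cases "d < e")
      case True
      have "x \<in> closure \<Omega>" using x closure_subset by blast
      then obtain p where p: "p \<in> C'" "ball x \<epsilon> \<subseteq> ball p (R p)" using eps(2) by blast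
      have "x \<in> ball x \<epsilon>" "y \<in> ball x \<epsilon>" using eps(1) True e by (auto simp: d_def)
      then have "x \<in> ball p (R p)" "y \<in> ball p (R p)" using p(2) by blast+
      then have "norm (f x - f y) \<le> A p * d" using RA(2)[of p x y] p(1) C'(1) x y by (auto simp: d_def)
      also have "\<dots> \<le> Am * d" using Am(2)[OF p(1)] d by (simp add: mult_right_mono)
      also have "\<dots> \<le> Am * d powr \<alpha>"
      proof -
        have "d powr 1 \<le> d powr \<alpha>" using powr_mono'[of \<alpha> 1 d] al True e d by simp
        then have "d \<le> d powr \<alpha>" using d by simp
        then show ?thesis using Am(1) by (simp add: mult_left_mono)
      qed
      finally have "norm (f x - f y) / d powr \<alpha> \<le> Am" using dpos by (simp add: divide_le_eq)
      then show ?thesis using t2 by (simp add: M_def d_def)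
    next
      case False
      have ep: "e powr \<alpha> \<le> d powr \<alpha>" using False e by (intro powr_mono2) (use al in auto)
      have ep0: "e powr \<alpha> > 0" using e by simp
      have nf: "norm (f x - f y) \<le> 2 * Sf" using Sf[OF x] Sf[OF y] norm_triangle_ineq4[of "f x" "f y"] by linarith
      have "norm (f x - f y) / d powr \<alpha> \<le> 2 * Sf / d powr \<alpha>" using nf dpos by (simp add: divide_right_mono)
      also have "\<dots> \<le> 2 * Sf / e powr \<alpha>" using ep ep0 Sf0 dpos by (intro divide_left_mono) auto
      finally show ?thesis using Am(1) by (simp add: M_def d_def)
    qed
  qed
  show ?thesis
    by (rule bdd_aboveI[of _ M]) (auto simp: holder_quots_def intro: quot)
qed

lemma quots_bound:
  assumes "bdd_above (holder_quots S \<alpha> f)"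
  obtains M where "\<And>x y. x \<in> S \<Longrightarrow> y \<in> S \<Longrightarrow> x \<noteq> y \<Longrightarrow> norm (f x - f y) / dist x y powr \<alpha> \<le> M"
proof -
  obtain M where "\<forall>q\<in>holder_quots S \<alpha> f. q \<le> M" using assms unfolding bdd_above_def by blast
  then show ?thesis using that unfolding holder_quots_def by blast
qed

lemma quots_bddI:
  assumes "\<And>x y. x \<in> S \<Longrightarrow> y \<in> S \<Longrightarrow> x \<noteq> y \<Longrightarrow> norm (f x - f y) / dist x y powr \<alpha> \<le> M"
  shows "bdd_above (holder_quots S \<alpha> f)"
  by (rule bdd_aboveI[of _ M]) (auto simp: holder_quots_def intro: assms)

lemma Hs_dom0:
  fixes f :: "real^'n::finite \<Rightarrow> 'b::real_normed_vector" and g :: "real^'n \<Rightarrow> 'c::real_normed_vector"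
    and F :: "real^'n \<Rightarrow> 'd::real_normed_vector"
  assumes "Hs S \<alpha> 0 f" "Hs S \<alpha> 0 g" "a \<ge> 0" "b \<ge> 0"
    and dom: "\<And>x y. x \<in> S \<Longrightarrow> y \<in> S \<Longrightarrow> norm (F x - F y) \<le> a * norm (f x - f y) + b * norm (g x - g y)"
  shows "Hs S \<alpha> 0 F"
  unfolding Hs_0
proof
  have uf: "uniformly_continuous_on S f" and ug: "uniformly_continuous_on S g"
    using assms(1,2) unfolding Hs_0 by auto
  show "uniformly_continuous_on S F"
    unfolding uniformly_continuous_on_def
  proof (intro allI impI)
    fix e :: real assume e: "e > 0"
    define e' where "e' = e / (a + b + 1)"
    have e': "e' > 0" "(a + b) * e' < e"
    proof -
      show "e' > 0" using e assms(3,4) by (simp add: e'_def)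
      have "(a + b) * e' < (a + b + 1) * e'" using \<open>e' > 0\<close> by simp
      also have "\<dots> = e" using assms(3,4) by (simp add: e'_def)
      finally show "(a + b) * e' < e" .
    qed
    obtain d1 where d1: "d1 > 0" "\<forall>x\<in>S. \<forall>x'\<in>S. dist x' x < d1 \<longrightarrow> dist (f x') (f x) < e'"
      using uf e'(1) unfolding uniformly_continuous_on_def by blast
    obtain d2 where d2: "d2 > 0" "\<forall>x\<in>S. \<forall>x'\<in>S. dist x' x < d2 \<longrightarrow> dist (g x') (g x) < e'"
      using ug e'(1) unfolding uniformly_continuous_on_def by blast
    show "\<exists>d>0. \<forall>x\<in>S. \<forall>x'\<in>S. dist x' x < d \<longrightarrow> dist (F x') (F x) < e"
    proof (intro exI[of _ "min d1 d2"] conjI ballI impI)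
      show "min d1 d2 > 0" using d1 d2 by simp
      fix x x' assume x: "x \<in> S" and x': "x' \<in> S" and dx: "dist x' x < min d1 d2"
      have "norm (f x' - f x) < e'" "norm (g x' - g x) < e'" using d1 d2 x x' dx by (auto simp: dist_norm)
      then have "a * norm (f x' - f x) \<le> a * e'" "b * norm (g x' - g x) \<le> b * e'"
        using assms(3,4) by (auto intro: mult_left_mono)
      then have "norm (F x' - F x) \<le> (a + b) * e'" using dom[OF x' x] by (simp add: algebra_simps)
      then show "dist (F x') (F x) < e" using e' by (simp add: dist_norm)
    qed
  qed
  obtain Mf where Mf: "\<And>x y. x \<in> S \<Longrightarrow> y \<in> S \<Longrightarrow> x \<noteq> y \<Longrightarrow> norm (f x - f y) / dist x y powr \<alpha> \<le> Mf"
    using quots_bound assms(1) unfolding Hs_0 by blast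
  obtain Mg where Mg: "\<And>x y. x \<in> S \<Longrightarrow> y \<in> S \<Longrightarrow> x \<noteq> y \<Longrightarrow> norm (g x - g y) / dist x y powr \<alpha> \<le> Mg"
    using quots_bound assms(2) unfolding Hs_0 by blast
  show "bdd_above (holder_quots S \<alpha> F)"
  proof (rule quots_bddI[of S F \<alpha> "a * Mf + b * Mg"])
    fix x y assume x: "x \<in> S" and y: "y \<in> S" and xy: "x \<noteq> y"
    have p: "dist x y powr \<alpha> > 0" using xy by simp
    have "norm (F x - F y) / dist x y powr \<alpha> \<le> (a * norm (f x - f y) + b * norm (g x - g y)) / dist x y powr \<alpha>"
      using dom[OF x y] p by (simp add: divide_right_mono)
    also have "\<dots> = a * (norm (f x - f y) / dist x y powr \<alpha>) + b * (norm (g x - g y) / dist x y powr \<alpha>)"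
      by (simp add: add_divide_distrib)
    also have "\<dots> \<le> a * Mf + b * Mg"
      using Mf[OF x y xy] Mg[OF x y xy] assms(3,4) by (intro add_mono mult_left_mono) auto
    finally show "norm (F x - F y) / dist x y powr \<alpha> \<le> a * Mf + b * Mg" .
  qed
qed

lemma Hs_const: "Hs S \<alpha> k (\<lambda>x. c)" if "open S"
proof (induction k arbitrary: c)
  case 0
  show ?case unfolding Hs_0
    by (auto intro!: quots_bddI[of S _ \<alpha> 0] uniformly_continuous_on_const)
next
  case (Suc k)
  show ?case
    by (rule Hs_SucI[OF that, where F'="\<lambda>i x. 0"]) (auto intro: Suc.IH uniformly_continuous_on_const)
qed

locale dom =
  fixes \<Omega> :: "(real^'n::finite) set" and \<alpha> :: real
  assumes op: "open \<Omega>" and bd: "bounded \<Omega>" and c2: "C2_boundary \<Omega>" and a0: "0 < \<alpha>" and a1: "\<alpha> < 1"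
begin

lemma Hs_mono1:
  fixes f :: "real^'n \<Rightarrow> 'b::euclidean_space"
  shows "Hs \<Omega> \<alpha> (Suc k) f \<Longrightarrow> Hs \<Omega> \<alpha> k f"
proof (induction k arbitrary: f)
  case 0
  then have h: "has_pderivs_upto \<Omega> 1 f" "uniformly_continuous_on \<Omega> f" "\<And>i. Hs \<Omega> \<alpha> 0 (pdir i f)"
    unfolding Hs_Suc by auto
  then have "\<And>i. uniformly_continuous_on \<Omega> (pdir i f)" unfolding Hs_0 by auto
  then have "bdd_above (holder_quots \<Omega> \<alpha> f)"
    using C1_holder[OF op bd c2 _ _ h(1,2)] a0 a1 by auto
  then show ?case using h unfolding Hs_0 by auto
next
  case (Suc k)
  then show ?case unfolding Hs_Suc[of \<Omega> \<alpha> "Suc k"] unfolding Hs_Suc[of \<Omega> \<alpha> k] by blast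
qed

lemma Hs_mono:
  fixes f :: "real^'n \<Rightarrow> 'b::euclidean_space"
  shows "m \<le> k \<Longrightarrow> Hs \<Omega> \<alpha> k f \<Longrightarrow> Hs \<Omega> \<alpha> m f"
proof (induction k)
  case 0 then show ?case by simp
next
  case (Suc k) then show ?case using Hs_mono1 by (metis le_SucE)
qed

lemma Hs_bounded:
  fixes f :: "real^'n \<Rightarrow> 'b::euclidean_space"
  assumes "Hs \<Omega> \<alpha> k f"
  obtains B where "B \<ge> 0" "\<And>x. x \<in> \<Omega> \<Longrightarrow> norm (f x) \<le> B"
proof -
  have "uniformly_continuous_on \<Omega> f" using assms unfolding Hs_def by (metis le0 list.size(3) pdiff.simps(1))
  then have "bounded (f ` \<Omega>)" using bounded_uniformly_continuous_image bd by blast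
  then obtain B where "\<And>x. x \<in> \<Omega> \<Longrightarrow> norm (f x) \<le> B" unfolding bounded_iff by blast
  then show ?thesis using that[of "\<bar>B\<bar>"] by force
qed

lemma Hs_ucont:
  fixes f :: "real^'n \<Rightarrow> 'b::real_normed_vector"
  assumes "Hs \<Omega> \<alpha> k f" shows "uniformly_continuous_on \<Omega> f"
  using assms unfolding Hs_def by (metis le0 list.size(3) pdiff.simps(1))

lemma Hs_add:
  fixes f g :: "real^'n \<Rightarrow> 'b::euclidean_space"
  shows "Hs \<Omega> \<alpha> k f \<Longrightarrow> Hs \<Omega> \<alpha> k g \<Longrightarrow> Hs \<Omega> \<alpha> k (\<lambda>x. f x + g x)"
proof (induction k arbitrary: f g)
  case 0
  show ?case
    by (rule Hs_dom0[OF 0(1,2), of 1 1]) (auto intro: norm_diff_triangle_ineq simp: algebra_simps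
        order_trans[OF _ norm_triangle_ineq])
next
  case (Suc k)
  have b: "Hs \<Omega> \<alpha> 0 (\<lambda>x. f x + g x)"
    by (rule Hs_dom0[OF Hs_mono[OF _ Suc.prems(1)] Hs_mono[OF _ Suc.prems(2)], of 1 1])
      (auto simp: algebra_simps intro: order_trans[OF _ norm_triangle_ineq])
  show ?case
  proof (rule Hs_SucI[OF op, where F'="\<lambda>i x. pdir i f x + pdir i g x"])
    fix i x assume "x \<in> \<Omega>"
    show "((\<lambda>t. f (x + t *\<^sub>R axis i 1) + g (x + t *\<^sub>R axis i 1)) has_vector_derivative pdir i f x + pdir i g x) (at 0)"
      by (rule has_vector_derivative_add; rule Hs_SucD[OF _ \<open>x \<in> \<Omega>\<close>]) (use Suc.prems in auto)
  next
    show "uniformly_continuous_on \<Omega> (\<lambda>x. f x + g x)" using b unfolding Hs_0 by auto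
  next
    fix i show "Hs \<Omega> \<alpha> k (\<lambda>x. pdir i f x + pdir i g x)"
      using Suc.IH Suc.prems unfolding Hs_Suc by blast
  qed
qed

end

context dom begin

lemma Hs_lin:
  fixes f :: "real^'n \<Rightarrow> 'b::euclidean_space" and L :: "'b \<Rightarrow> 'c::euclidean_space"
  assumes L: "bounded_linear L"
  shows "Hs \<Omega> \<alpha> k f \<Longrightarrow> Hs \<Omega> \<alpha> k (\<lambda>x. L (f x))"
proof (induction k arbitrary: f)
  case 0
  obtain K where K: "K > 0" "\<And>x. norm (L x) \<le> norm x * K" using bounded_linear.pos_bounded[OF L] by blast
  show ?case
  proof (rule Hs_dom0[OF 0 0, of K 0])
    fix x y
    have "norm (L (f x) - L (f y)) = norm (L (f x - f y))" by (simp add: linear_diff[OF bounded_linear.linear[OF L]])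
    also have "\<dots> \<le> K * norm (f x - f y)" using K(2)[of "f x - f y"] by (simp add: mult.commute)
    finally show "norm (L (f x) - L (f y)) \<le> K * norm (f x - f y) + 0 * norm (f x - f y)" by simp
  qed (use K in auto)
next
  case (Suc k)
  obtain K where K: "K > 0" "\<And>x. norm (L x) \<le> norm x * K" using bounded_linear.pos_bounded[OF L] by blast
  have b: "Hs \<Omega> \<alpha> 0 (\<lambda>x. L (f x))"
  proof (rule Hs_dom0[OF Hs_mono[OF _ Suc.prems] Hs_mono[OF _ Suc.prems], of K 0])
    fix x y
    have "norm (L (f x) - L (f y)) = norm (L (f x - f y))" by (simp add: linear_diff[OF bounded_linear.linear[OF L]])
    also have "\<dots> \<le> K * norm (f x - f y)" using K(2)[of "f x - f y"] by (simp add: mult.commute)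
    finally show "norm (L (f x) - L (f y)) \<le> K * norm (f x - f y) + 0 * norm (f x - f y)" by simp
  qed (use K in auto)
  show ?case
  proof (rule Hs_SucI[OF op, where F'="\<lambda>i x. L (pdir i f x)"])
    fix i x assume "x \<in> \<Omega>"
    show "((\<lambda>t. L (f (x + t *\<^sub>R axis i 1))) has_vector_derivative L (pdir i f x)) (at 0)"
      by (rule bounded_linear.has_vector_derivative[OF L Hs_SucD[OF Suc.prems \<open>x \<in> \<Omega>\<close>]])
  next
    show "uniformly_continuous_on \<Omega> (\<lambda>x. L (f x))" using b unfolding Hs_0 by auto
  next
    fix i show "Hs \<Omega> \<alpha> k (\<lambda>x. L (pdir i f x))"
      using Suc.IH Suc.prems unfolding Hs_Suc by blast
  qed
qed

lemma Hs_mult0: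
  fixes f g :: "real^'n \<Rightarrow> real"
  assumes "Hs \<Omega> \<alpha> 0 f" "Hs \<Omega> \<alpha> 0 g"
  shows "Hs \<Omega> \<alpha> 0 (\<lambda>x. f x * g x)"
proof -
  obtain Bf where Bf: "Bf \<ge> 0" "\<And>x. x \<in> \<Omega> \<Longrightarrow> norm (f x) \<le> Bf" using Hs_bounded[OF assms(1)] by blast
  obtain Bg where Bg: "Bg \<ge> 0" "\<And>x. x \<in> \<Omega> \<Longrightarrow> norm (g x) \<le> Bg" using Hs_bounded[OF assms(2)] by blast
  show ?thesis
  proof (rule Hs_dom0[OF assms Bg(1) Bf(1)])
    fix x y assume x: "x \<in> \<Omega>" and y: "y \<in> \<Omega>"
    have "f x * g x - f y * g y = (f x - f y) * g x + f y * (g x - g y)" by (simp add: algebra_simps)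
    then have "norm (f x * g x - f y * g y) \<le> \<bar>f x - f y\<bar> * \<bar>g x\<bar> + \<bar>f y\<bar> * \<bar>g x - g y\<bar>"
      by (simp add: abs_mult[symmetric])
    also have "\<dots> \<le> \<bar>f x - f y\<bar> * Bg + Bf * \<bar>g x - g y\<bar>"
      using Bf(2)[OF y] Bg(2)[OF x] by (intro add_mono mult_mono) auto
    finally show "norm (f x * g x - f y * g y) \<le> Bg * norm (f x - f y) + Bf * norm (g x - g y)"
      by (simp add: mult.commute)
  qed
qed

lemma Hs_mult:
  fixes f g :: "real^'n \<Rightarrow> real"
  shows "Hs \<Omega> \<alpha> k f \<Longrightarrow> Hs \<Omega> \<alpha> k g \<Longrightarrow> Hs \<Omega> \<alpha> k (\<lambda>x. f x * g x)"
proof (induction k arbitrary: f g)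
  case 0 then show ?case by (rule Hs_mult0)
next
  case (Suc k)
  have b: "Hs \<Omega> \<alpha> 0 (\<lambda>x. f x * g x)"
    by (rule Hs_mult0[OF Hs_mono[OF _ Suc.prems(1)] Hs_mono[OF _ Suc.prems(2)]]) auto
  show ?case
  proof (rule Hs_SucI[OF op, where F'="\<lambda>i x. pdir i f x * g x + pdir i g x * f x"])
    fix i x assume x: "x \<in> \<Omega>"
    have df: "((\<lambda>t. f (x + t *\<^sub>R axis i 1)) has_real_derivative pdir i f x) (at 0)"
      using Hs_SucD[OF Suc.prems(1) x] unfolding has_real_derivative_iff_has_vector_derivative .
    have dg: "((\<lambda>t. g (x + t *\<^sub>R axis i 1)) has_real_derivative pdir i g x) (at 0)"
      using Hs_SucD[OF Suc.prems(2) x] unfolding has_real_derivative_iff_has_vector_derivative .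
    have "((\<lambda>t. f (x + t *\<^sub>R axis i 1) * g (x + t *\<^sub>R axis i 1)) has_real_derivative pdir i f x * g x + pdir i g x * f x) (at 0)"
      using DERIV_mult[OF df dg] by simp
    then show "((\<lambda>t. f (x + t *\<^sub>R axis i 1) * g (x + t *\<^sub>R axis i 1)) has_vector_derivative pdir i f x * g x + pdir i g x * f x) (at 0)"
      unfolding has_real_derivative_iff_has_vector_derivative .
  next
    show "uniformly_continuous_on \<Omega> (\<lambda>x. f x * g x)" using b unfolding Hs_0 by auto
  next
    fix i
    have hf: "Hs \<Omega> \<alpha> k f" "Hs \<Omega> \<alpha> k g" using Hs_mono1 Suc.prems by auto
    have "Hs \<Omega> \<alpha> k (pdir i f)" "Hs \<Omega> \<alpha> k (pdir i g)" using Suc.prems unfolding Hs_Suc by auto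
    then show "Hs \<Omega> \<alpha> k (\<lambda>x. pdir i f x * g x + pdir i g x * f x)"
      using Suc.IH hf Hs_add by blast
  qed
qed

lemma Hs_inv:
  fixes h :: "real^'n \<Rightarrow> real"
  assumes m: "m > 0"
  shows "Hs \<Omega> \<alpha> k h \<Longrightarrow> (\<forall>x\<in>\<Omega>. h x \<ge> m) \<Longrightarrow> Hs \<Omega> \<alpha> k (\<lambda>x. inverse (h x))"
proof (induction k arbitrary: h)
  have base: "Hs \<Omega> \<alpha> 0 (\<lambda>x. inverse (h x))" if "Hs \<Omega> \<alpha> 0 h" "\<forall>x\<in>\<Omega>. h x \<ge> m" for h
  proof (rule Hs_dom0[OF that(1) that(1), of "1 / m^2" 0])
    fix x y assume x: "x \<in> \<Omega>" and y: "y \<in> \<Omega>"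
    have hx: "h x \<ge> m" and hy: "h y \<ge> m" using that x y by auto
    then have pos: "h x > 0" "h y > 0" using m by auto
    have "inverse (h x) - inverse (h y) = (h y - h x) / (h x * h y)" using pos by (simp add: field_simps)
    then have "norm (inverse (h x) - inverse (h y)) = \<bar>h x - h y\<bar> / (h x * h y)" using pos by simp
    also have "\<dots> \<le> \<bar>h x - h y\<bar> / m^2"
    proof (rule divide_left_mono)
      show "m^2 \<le> h x * h y" using hx hy m unfolding power2_eq_square by (intro mult_mono) auto
    qed (use m pos in auto)
    finally show "norm (inverse (h x) - inverse (h y)) \<le> 1 / m^2 * norm (h x - h y) + 0 * norm (h x - h y)" by simp
  qed auto
  {
    case 0 then show ?case using base by blast
  next
    case (Suc k)
    have hk: "Hs \<Omega> \<alpha> k h" using Hs_mono1 Suc.prems by auto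
    have ih: "Hs \<Omega> \<alpha> k (\<lambda>x. inverse (h x))" using Suc.IH hk Suc.prems(2) by blast
    show ?case
    proof (rule Hs_SucI[OF op, where F'="\<lambda>i x. - (pdir i h x * (inverse (h x) * inverse (h x)))"])
      fix i x assume x: "x \<in> \<Omega>"
      have dh: "((\<lambda>t. h (x + t *\<^sub>R axis i 1)) has_real_derivative pdir i h x) (at 0)"
        using Hs_SucD[OF Suc.prems(1) x] unfolding has_real_derivative_iff_has_vector_derivative .
      have "h x \<noteq> 0" using Suc.prems(2) x m by force
      then have "((\<lambda>t. inverse (h (x + t *\<^sub>R axis i 1))) has_real_derivative - (pdir i h x * (inverse (h x) * inverse (h x)))) (at 0)"
        using DERIV_inverse_fun[OF dh] by (simp add: power2_eq_square)
      then show "((\<lambda>t. inverse (h (x + t *\<^sub>R axis i 1))) has_vector_derivative - (pdir i h x * (inverse (h x) * inverse (h x)))) (at 0)"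
        unfolding has_real_derivative_iff_has_vector_derivative .
    next
      show "uniformly_continuous_on \<Omega> (\<lambda>x. inverse (h x))"
        using base[OF Hs_mono[OF _ Suc.prems(1)] Suc.prems(2)] unfolding Hs_0 by auto
    next
      fix i
      have "Hs \<Omega> \<alpha> k (pdir i h)" using Suc.prems unfolding Hs_Suc by auto
      then have "Hs \<Omega> \<alpha> k (\<lambda>x. pdir i h x * (inverse (h x) * inverse (h x)))"
        using Hs_mult ih by blast
      then show "Hs \<Omega> \<alpha> k (\<lambda>x. - (pdir i h x * (inverse (h x) * inverse (h x))))"
        using Hs_lin[OF bounded_linear_minus[OF bounded_linear_ident]] by blast
    qed
  }
qed

lemma sqrt_diff_bound:
  fixes a b m :: real
  assumes "m > 0" "a \<ge> m" "b \<ge> m"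
  shows "\<bar>sqrt a - sqrt b\<bar> \<le> 1 / (2 * sqrt m) * \<bar>a - b\<bar>"
proof -
  have sa: "sqrt a \<ge> sqrt m" "sqrt b \<ge> sqrt m" using assms by auto
  have sm: "sqrt m > 0" using assms by simp
  have "(sqrt a - sqrt b) * (sqrt a + sqrt b) = a - b" using assms
    by (simp add: algebra_simps)
  then have "\<bar>a - b\<bar> = \<bar>(sqrt a - sqrt b) * (sqrt a + sqrt b)\<bar>" by simp
  also have "\<dots> = \<bar>sqrt a - sqrt b\<bar> * \<bar>sqrt a + sqrt b\<bar>" by (rule abs_mult)
  also have "\<bar>sqrt a + sqrt b\<bar> = sqrt a + sqrt b" using sa sm by simp
  finally have "\<bar>a - b\<bar> = \<bar>sqrt a - sqrt b\<bar> * (sqrt a + sqrt b)" .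
  moreover have "\<bar>sqrt a - sqrt b\<bar> * (2 * sqrt m) \<le> \<bar>sqrt a - sqrt b\<bar> * (sqrt a + sqrt b)"
  proof -
    have "2 * sqrt m \<le> sqrt a + sqrt b" using sa by linarith
    then show ?thesis by (rule mult_left_mono) simp
  qed
  ultimately have "\<bar>sqrt a - sqrt b\<bar> * (2 * sqrt m) \<le> \<bar>a - b\<bar>" by simp
  then show ?thesis using sm by (simp add: field_simps)
qed

lemma Hs_sqrt:
  fixes g :: "real^'n \<Rightarrow> real"
  assumes m: "m > 0"
  shows "Hs \<Omega> \<alpha> k g \<Longrightarrow> (\<forall>x\<in>\<Omega>. g x \<ge> m) \<Longrightarrow> Hs \<Omega> \<alpha> k (\<lambda>x. sqrt (g x))"
proof (induction k arbitrary: g)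
  have base: "Hs \<Omega> \<alpha> 0 (\<lambda>x. sqrt (g x))" if "Hs \<Omega> \<alpha> 0 g" "\<forall>x\<in>\<Omega>. g x \<ge> m" for g
  proof (rule Hs_dom0[OF that(1) that(1), of "1 / (2 * sqrt m)" 0])
    fix x y assume x: "x \<in> \<Omega>" and y: "y \<in> \<Omega>"
    show "norm (sqrt (g x) - sqrt (g y)) \<le> 1 / (2 * sqrt m) * norm (g x - g y) + 0 * norm (g x - g y)"
      using sqrt_diff_bound[OF m, of "g x" "g y"] that x y by simp
  qed (use m in auto)
  {
    case 0 then show ?case using base by blast
  next
    case (Suc k)
    have gk: "Hs \<Omega> \<alpha> k g" using Hs_mono1 Suc.prems by auto
    have ih: "Hs \<Omega> \<alpha> k (\<lambda>x. sqrt (g x))" using Suc.IH gk Suc.prems(2) by blast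
    have sm: "\<forall>x\<in>\<Omega>. sqrt (g x) \<ge> sqrt m" using Suc.prems(2) by auto
    have ii: "Hs \<Omega> \<alpha> k (\<lambda>x. inverse (sqrt (g x)))" using Hs_inv[of "sqrt m"] m ih sm by auto
    show ?case
    proof (rule Hs_SucI[OF op, where F'="\<lambda>i x. inverse (sqrt (g x)) / 2 * pdir i g x"])
      fix i x assume x: "x \<in> \<Omega>"
      have dg: "((\<lambda>t. g (x + t *\<^sub>R axis i 1)) has_real_derivative pdir i g x) (at 0)"
        using Hs_SucD[OF Suc.prems(1) x] unfolding has_real_derivative_iff_has_vector_derivative .
      have "g x > 0" using Suc.prems(2) x m by force
      then have ds: "(sqrt has_real_derivative inverse (sqrt (g x)) / 2) (at (g (x + 0 *\<^sub>R axis i 1)))"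
        using DERIV_real_sqrt by simp
      have "((\<lambda>t. sqrt (g (x + t *\<^sub>R axis i 1))) has_real_derivative inverse (sqrt (g x)) / 2 * pdir i g x) (at 0)"
        using DERIV_chain2[OF ds dg] .
      then show "((\<lambda>t. sqrt (g (x + t *\<^sub>R axis i 1))) has_vector_derivative inverse (sqrt (g x)) / 2 * pdir i g x) (at 0)"
        unfolding has_real_derivative_iff_has_vector_derivative .
    next
      show "uniformly_continuous_on \<Omega> (\<lambda>x. sqrt (g x))"
        using base[OF Hs_mono[OF _ Suc.prems(1)] Suc.prems(2)] unfolding Hs_0 by auto
    next
      fix i
      have "Hs \<Omega> \<alpha> k (pdir i g)" using Suc.prems unfolding Hs_Suc by auto
      moreover have "Hs \<Omega> \<alpha> k (\<lambda>x. inverse (sqrt (g x)) / 2)"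
        using Hs_lin[OF bounded_linear_divide[of 2]] ii by blast
      ultimately show "Hs \<Omega> \<alpha> k (\<lambda>x. inverse (sqrt (g x)) / 2 * pdir i g x)"
        using Hs_mult by blast
    qed
  }
qed

end

lemma pdiff_const: "pdiff \<beta> (\<lambda>x. c) = (\<lambda>x. if \<beta> = [] then c else 0)"
proof (induction \<beta>)
  case Nil then show ?case by simp
next
  case (Cons i \<beta>)
  show ?case by (simp add: Cons.IH pdir_def vector_derivative_const_at fun_eq_iff)
qed

lemma hvd_line_lin:
  fixes G :: "real^'n::finite^'m::finite"
  shows "((\<lambda>t. G *v (x + t *\<^sub>R axis i 1)) has_vector_derivative G *v axis i 1) (at 0)"
proof -
  have "((\<lambda>t. x + t *\<^sub>R axis i (1::real)) has_vector_derivative axis i 1) (at 0)"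
    by (auto simp: has_vector_derivative_def intro!: derivative_eq_intros)
  then show ?thesis by (rule bounded_linear.has_vector_derivative[OF matrix_vector_mul_bounded_linear])
qed

lemma pdir_lin:
  fixes G :: "real^'n::finite^'m::finite"
  shows "pdir i (\<lambda>x. G *v x) = (\<lambda>x. G *v axis i 1)"
  by (rule ext) (rule pdir_eq[OF hvd_line_lin])

lemma pdiff_lin_const:
  fixes G :: "real^'n::finite^'m::finite"
  assumes "\<beta> \<noteq> []"
  shows "\<exists>c. pdiff \<beta> (\<lambda>x. G *v x) = (\<lambda>x. c)"
proof (cases \<beta> rule: rev_exhaust)
  case Nil then show ?thesis using assms by simp
next
  case (snoc \<gamma> i)
  show ?thesis by (cases "\<gamma> = []") (auto simp: snoc pdiff_append pdir_lin pdiff_const)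
qed

lemma Cinf_lin:
  fixes G :: "real^'n::finite^'n"
  shows "Cinf_closure S (\<lambda>x. G *v x)"
  unfolding Cinf_closure_def Ck_closure_def
proof (intro allI conjI)
  fix k
  show "continuous_on (closure S) (\<lambda>x. G *v x)" by (rule matrix_vector_mult_linear_continuous_on)
  show "has_pderivs_upto S k (\<lambda>x. G *v x)"
    unfolding has_pderivs_upto_def
  proof (intro allI impI)
    fix \<beta> :: "'n list" and i x
    show "((\<lambda>t. pdiff \<beta> (\<lambda>x. G *v x) (x + t *\<^sub>R axis i 1)) has_vector_derivative pdiff (i # \<beta>) (\<lambda>x. G *v x) x) (at 0)"
    proof (cases "\<beta> = []")
      case True then show ?thesis using hvd_line_lin[of G x i] by (simp add: pdir_lin)
    next
      case False
      then obtain c where c: "pdiff \<beta> (\<lambda>x. G *v x) = (\<lambda>x. c)" using pdiff_lin_const by blast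
      have "pdir i (\<lambda>x. c) x = 0" using pdiff_const[of "[i]" c] by (simp add: fun_eq_iff)
      then show ?thesis by (simp add: c)
    qed
  qed
  fix \<beta> :: "'n list"
  show "length \<beta> \<le> k \<longrightarrow> uniformly_continuous_on S (pdiff \<beta> (\<lambda>x. G *v x))"
  proof (cases "\<beta> = []")
    case True then show ?thesis
      using bounded_linear.uniformly_continuous_on[OF matrix_vector_mul_bounded_linear uniformly_continuous_on_id]
      by simp
  next
    case False
    then obtain c where c: "pdiff \<beta> (\<lambda>x. G *v x) = (\<lambda>x. c)" using pdiff_lin_const by blast
    then show ?thesis by (simp add: uniformly_continuous_on_const)
  qed
qed

lemma pdiff_add_const:
  fixes f :: "real^'n::finite \<Rightarrow> 'b::real_normed_vector"
  assumes "open S" "has_pderivs_upto S k f"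
  shows "length \<beta> \<le> k \<Longrightarrow> x \<in> S \<Longrightarrow> pdiff \<beta> (\<lambda>y. f y + c) x = pdiff \<beta> f x + (if \<beta> = [] then c else 0)"
proof (induction \<beta> arbitrary: x)
  case Nil then show ?case by simp
next
  case (Cons i \<beta>)
  define c' where "c' = (if \<beta> = [] then c else 0)"
  have IH: "\<And>y. y \<in> S \<Longrightarrow> pdiff \<beta> (\<lambda>y. f y + c) y = pdiff \<beta> f y + c'"
    using Cons.IH Cons.prems(1) by (simp add: c'_def)
  have "pdiff (i # \<beta>) (\<lambda>y. f y + c) x = pdir i (\<lambda>y. pdiff \<beta> f y + c') x"
    using pdir_cong[OF assms(1) Cons.prems(2) IH] by simp
  also have "\<dots> = pdiff (i # \<beta>) f x"
  proof (rule pdir_eq)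
    have "((\<lambda>t. pdiff \<beta> f (x + t *\<^sub>R axis i 1)) has_vector_derivative pdiff (i # \<beta>) f x) (at 0)"
      using assms(2) Cons.prems unfolding has_pderivs_upto_def by auto
    then show "((\<lambda>t. pdiff \<beta> f (x + t *\<^sub>R axis i 1) + c') has_vector_derivative pdiff (i # \<beta>) f x) (at 0)"
      using has_vector_derivative_add[OF _ has_vector_derivative_const[of c']] by fastforce
  qed
  finally show ?case by simp
qed

lemma quots_shift: "holder_quots S \<alpha> (\<lambda>x. g x + c) = holder_quots S \<alpha> g"
  unfolding holder_quots_def by simp

lemma holder_norm0: "holder_norm S 0 \<alpha> F = supnorm S F + holder_semi S \<alpha> F"
proof -
  have e: "{\<beta>::'n list. length \<beta> = 0} = {[]}" by auto
  show ?thesis unfolding holder_norm_def holder_seminorm_def e by simp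
qed

lemma supnorm_upper:
  assumes "bounded (g ` S)" "x \<in> S"
  shows "norm (g x) \<le> supnorm S g"
proof -
  obtain B where "\<forall>y\<in>g ` S. norm y \<le> B" using assms(1) unfolding bounded_iff by blast
  then have "bdd_above ((\<lambda>x. norm (g x)) ` S)" by (auto intro!: bdd_aboveI[of _ B])
  then show ?thesis unfolding supnorm_def using cSUP_upper[OF assms(2)] by blast
qed

lemma supnorm_le:
  assumes "S \<noteq> {}" "\<And>x. x \<in> S \<Longrightarrow> norm (g x) \<le> B"
  shows "supnorm S g \<le> B"
  unfolding supnorm_def using assms by (rule cSUP_least)

lemma supnorm_nonneg:
  assumes "bounded (g ` S)" "x \<in> S"
  shows "supnorm S g \<ge> 0"
  using supnorm_upper[OF assms] norm_ge_zero[of "g x"] by linarith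

lemma semi_nonneg:
  assumes "bdd_above (holder_quots S \<alpha> g)" "x \<in> S" "y \<in> S" "x \<noteq> y"
  shows "holder_semi S \<alpha> g \<ge> 0"
proof -
  have "norm (g x - g y) / dist x y powr \<alpha> \<in> holder_quots S \<alpha> g" unfolding holder_quots_def using assms by blast
  then have "norm (g x - g y) / dist x y powr \<alpha> \<le> holder_semi S \<alpha> g"
    unfolding holder_semi_def using assms(1) by (rule cSup_upper)
  moreover have "norm (g x - g y) / dist x y powr \<alpha> \<ge> 0" by simp
  ultimately show ?thesis by linarith
qed

lemma semi_le:
  assumes "x \<in> S" "y \<in> S" "x \<noteq> y"
    and "\<And>x y. x \<in> S \<Longrightarrow> y \<in> S \<Longrightarrow> x \<noteq> y \<Longrightarrow> norm (g x - g y) / dist x y powr \<alpha> \<le> B"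
  shows "holder_semi S \<alpha> g \<le> B"
  unfolding holder_semi_def
proof (rule cSup_least)
  show "holder_quots S \<alpha> g \<noteq> {}" unfolding holder_quots_def using assms(1-3) by blast
  fix q assume "q \<in> holder_quots S \<alpha> g"
  then show "q \<le> B" unfolding holder_quots_def using assms(4) by blast
qed

lemma span_repr:
  fixes T :: "nat \<Rightarrow> 'v::real_normed_vector" and Lc :: "nat \<Rightarrow> 'v \<Rightarrow> real"
  assumes L: "\<And>i. i \<in> I \<Longrightarrow> bounded_linear (Lc i)"
    and d: "\<And>i k. i \<in> I \<Longrightarrow> k \<in> I \<Longrightarrow> Lc i (T k) = (if i = k then 1 else 0)"
    and u: "u \<in> span (T ` I)" and fin: "finite I"
  shows "u = (\<Sum>i\<in>I. Lc i u *\<^sub>R T i)"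
proof (rule real_vector.span_induct[OF u, where P="\<lambda>u. u = (\<Sum>i\<in>I. Lc i u *\<^sub>R T i)"])
  show "real_vector.subspace {u. u = (\<Sum>i\<in>I. Lc i u *\<^sub>R T i)}"
    unfolding real_vector.subspace_def
  proof (intro conjI ballI allI)
    show "0 \<in> {u. u = (\<Sum>i\<in>I. Lc i u *\<^sub>R T i)}"
      using L by (simp add: linear_simps)
  next
    fix x y assume x: "x \<in> {u. u = (\<Sum>i\<in>I. Lc i u *\<^sub>R T i)}" and y: "y \<in> {u. u = (\<Sum>i\<in>I. Lc i u *\<^sub>R T i)}"
    have "(\<Sum>i\<in>I. Lc i (x + y) *\<^sub>R T i) = (\<Sum>i\<in>I. Lc i x *\<^sub>R T i + Lc i y *\<^sub>R T i)"
      by (rule sum.cong) (use L in \<open>auto simp: linear_simps scaleR_add_left\<close>)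
    also have "\<dots> = x + y" using x y by (simp add: sum.distrib)
    finally show "x + y \<in> {u. u = (\<Sum>i\<in>I. Lc i u *\<^sub>R T i)}" by simp
  next
    fix c x assume x: "x \<in> {u. u = (\<Sum>i\<in>I. Lc i u *\<^sub>R T i)}"
    have "(\<Sum>i\<in>I. Lc i (c *\<^sub>R x) *\<^sub>R T i) = (\<Sum>i\<in>I. c *\<^sub>R (Lc i x *\<^sub>R T i))"
      by (rule sum.cong) (use L in \<open>auto simp: linear_simps\<close>)
    also have "\<dots> = c *\<^sub>R (\<Sum>i\<in>I. Lc i x *\<^sub>R T i)" by (rule scaleR_sum_right[symmetric])
    also have "\<dots> = c *\<^sub>R x"
    proof -
      have xe: "x = (\<Sum>i\<in>I. Lc i x *\<^sub>R T i)" using x by (rule CollectD)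
      show ?thesis by (rule arg_cong[OF xe[symmetric]])
    qed
    finally show "c *\<^sub>R x \<in> {u. u = (\<Sum>i\<in>I. Lc i u *\<^sub>R T i)}" by simp
  qed
next
  fix x assume "x \<in> T ` I"
  then obtain k where k: "k \<in> I" "x = T k" by blast
  have "(\<Sum>i\<in>I. Lc i (T k) *\<^sub>R T i) = (\<Sum>i\<in>I. if i = k then T k else 0)"
    by (rule sum.cong) (auto simp: d k)
  also have "\<dots> = T k" using k(1) fin by (simp add: sum.delta')
  finally show "x = (\<Sum>i\<in>I. Lc i x *\<^sub>R T i)" using k by simp
qed

lemma lin_quot:
  fixes d R \<alpha> :: real
  assumes "d > 0" "d \<le> 2 * R" "0 \<le> \<alpha>" "\<alpha> \<le> 1"
  shows "d / d powr \<alpha> \<le> 1 + 2 * R"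
proof (cases "d \<le> 1")
  case True
  have "d powr 1 \<le> d powr \<alpha>" using powr_mono'[of \<alpha> 1 d] assms True by simp
  then have "d \<le> d powr \<alpha>" using assms by simp
  then have "d / d powr \<alpha> \<le> 1" using assms by (simp add: divide_le_eq)
  then show ?thesis using assms by linarith
next
  case False
  have "1 \<le> d powr \<alpha>" using False assms by (intro ge_one_powr_ge_zero) auto
  then have "d / d powr \<alpha> \<le> d" using assms by (simp add: divide_le_eq mult_le_cancel_left1)
  then show ?thesis using assms by linarith
qed

theorem lemma3p3:
  fixes \<Omega> :: "(real^'n) set" and j :: nat and \<alpha> :: real
    and U :: "(real^'n^'n) set" and nU :: nat and \<xi> :: "nat \<Rightarrow> real^'n" and Mhat :: real
  assumes "open \<Omega>" and "connected \<Omega>" and "\<Omega> \<noteq> {}" and "bounded \<Omega>" and "C2_boundary \<Omega>"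
    and "0 < \<alpha>" and "\<alpha> < 1"
    and "inj_on (\<lambda>i. tensor_sq (\<xi> i)) {1..nU}"
    and "independent ((\<lambda>i. tensor_sq (\<xi> i)) ` {1..nU})"
    and "U = span ((\<lambda>i. tensor_sq (\<xi> i)) ` {1..nU})"
    and "\<forall>i\<in>{1..nU}. norm (tensor_sq (\<xi> i)) = 1"
    and "Mhat > 0"
  shows "\<exists>M1>0. \<exists>M2>0. \<forall>Dh :: real^'n \<Rightarrow> real^'n^'n.
           holder_space \<Omega> j \<alpha> Dh \<and> (\<forall>x\<in>closure \<Omega>. Dh x \<in> U) \<and> holder_norm \<Omega> 0 \<alpha> Dh \<le> Mhat \<longrightarrow>
           (\<exists>Phi :: real^'n \<Rightarrow> real^'n. \<exists>a :: nat \<Rightarrow> real^'n \<Rightarrow> real. \<exists>G :: real^'n^'n.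
              Cinf_closure \<Omega> Phi \<and> (\<forall>i\<in>{1..nU}. holder_space \<Omega> j \<alpha> (a i)) \<and>
              (\<forall>x\<in>\<Omega>. (Phi has_derivative (\<lambda>h. G *v h)) (at x)) \<and>
              (\<forall>x\<in>closure \<Omega>. Dh x + symm_part G = (\<Sum>i=1..nU. (a i x)\<^sup>2 *\<^sub>R tensor_sq (\<xi> i))) \<and>
              holder_norm \<Omega> 0 \<alpha> (\<lambda>x. \<Sum>i=1..nU. (a i x)\<^sup>2 *\<^sub>R tensor_sq (\<xi> i)) + norm G
                + holder_norm \<Omega> 0 \<alpha> Phi \<le> M1 * holder_norm \<Omega> 0 \<alpha> Dh \<and>
              holder_seminorm \<Omega> j \<alpha> (\<lambda>x. \<Sum>i=1..nU. (a i x)\<^sup>2 *\<^sub>R tensor_sq (\<xi> i)) + norm G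
                + holder_norm \<Omega> 0 \<alpha> Phi \<le> M2 * holder_norm \<Omega> j \<alpha> Dh)"
proof -
  interpret dom \<Omega> \<alpha> using assms by unfold_locales auto
  have op: "open \<Omega>" using assms(1) .
  define T where "T i = tensor_sq (\<xi> i)" for i
  have Tfun: "(\<lambda>i. tensor_sq (\<xi> i)) = T" by (simp add: T_def fun_eq_iff)
  have indep: "independent (T ` {1..nU})" using assms(9) unfolding Tfun .
  have injT: "inj_on T {1..nU}" using assms(8) unfolding Tfun .
  have UT: "U = span (T ` {1..nU})" using assms(10) unfolding Tfun .
  have nT: "norm (T i) = 1" if "i \<in> {1..nU}" for i using assms(11) that by (simp add: T_def)
  have "\<forall>i\<in>{1..nU}. \<exists>g. linear g \<and> (\<forall>x\<in>T ` {1..nU}. g x = (if x = T i then 1 else (0::real)))"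
  proof
    fix i :: nat
    show "\<exists>g. linear g \<and> (\<forall>x\<in>T ` {1..nU}. g x = (if x = T i then 1 else (0::real)))"
      using real_vector.linear_independent_extend[OF indep, of "\<lambda>x. if x = T i then 1 else (0::real)"] by blast
  qed
  from bchoice[OF this] obtain Lc where
    Lc0: "\<forall>i\<in>{1..nU}. linear (Lc i) \<and> (\<forall>x\<in>T ` {1..nU}. Lc i x = (if x = T i then 1 else (0::real)))"
    by blast
  have LcB: "bounded_linear (Lc i)" if "i \<in> {1..nU}" for i
    using Lc0 that linear_conv_bounded_linear by blast
  have Lcd: "Lc i (T k) = (if i = k then 1 else 0)" if "i \<in> {1..nU}" "k \<in> {1..nU}" for i k
    using Lc0 that inj_on_eq_iff[OF injT that(2) that(1)] by auto
  have repr: "u = (\<Sum>i\<in>{1..nU}. Lc i u *\<^sub>R T i)" if "u \<in> U" for u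
    by (rule span_repr[where I="{1..nU}"]) (use LcB Lcd UT that in auto)
  have "\<forall>i\<in>{1..nU}. \<exists>Ki. Ki > 0 \<and> (\<forall>x. norm (Lc i x) \<le> norm x * Ki)"
    using LcB bounded_linear.pos_bounded by blast
  from bchoice[OF this] obtain Kf where Kf: "\<forall>i\<in>{1..nU}. Kf i > 0 \<and> (\<forall>x. norm (Lc i x) \<le> norm x * Kf i)"
    by blast
  have KfP: "Kf i > 0" if "i \<in> {1..nU}" for i using Kf that by blast
  have KfB: "norm (Lc i x) \<le> norm x * Kf i" if "i \<in> {1..nU}" for i x using Kf that by blast
  define K where "K = 1 + (\<Sum>i\<in>{1..nU}. Kf i)"
  have Ksum: "(\<Sum>i\<in>{1..nU}. Kf i) \<ge> 0" using KfP by (intro sum_nonneg) (simp add: less_imp_le)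
  have K0': "K > 0" using Ksum by (simp add: K_def)
  have Kb: "\<bar>Lc i u\<bar> \<le> K * norm u" if i: "i \<in> {1..nU}" for i u
  proof -
    have "Kf i \<le> (\<Sum>i\<in>{1..nU}. Kf i)" using i KfP by (intro member_le_sum) (auto simp: less_imp_le)
    then have "Kf i \<le> K" by (simp add: K_def)
    then have "norm u * Kf i \<le> norm u * K" by (simp add: mult_left_mono)
    then show ?thesis using KfB[OF i, of u] by (simp add: mult.commute)
  qed
  define G0 where "G0 = (\<Sum>i\<in>{1..nU}. T i)"
  have nG0: "norm G0 \<le> real nU"
  proof -
    have "norm G0 \<le> (\<Sum>i\<in>{1..nU}. norm (T i))" unfolding G0_def by (rule norm_sum)
    also have "\<dots> = (\<Sum>i\<in>{1..nU}. 1)" by (rule sum.cong) (auto simp: nT)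
    finally show ?thesis by simp
  qed
  have G0sym: "G0 $ a $ b = G0 $ b $ a" for a b
    by (simp add: G0_def T_def tensor_sq_def sum_component mult.commute)
  obtain K0 where K0: "K0 > 0" "\<And>x. norm (G0 *v x) \<le> norm x * K0"
    using bounded_linear.pos_bounded[OF matrix_vector_mul_bounded_linear[of G0]] by blast
  obtain R where R: "R > 0" "\<And>x. x \<in> \<Omega> \<Longrightarrow> norm x \<le> R"
    using assms(4) unfolding bounded_pos by blast
  obtain p1 where p1: "p1 \<in> \<Omega>" using assms(3) by blast
  obtain r where r: "r > 0" "ball p1 r \<subseteq> \<Omega>" using op p1 open_contains_ball by blast
  define i0 where "i0 = (undefined :: 'n)"
  define p2 where "p2 = p1 + (r/2) *\<^sub>R axis i0 (1::real)"
  have p2: "p2 \<in> \<Omega>" "p1 \<noteq> p2"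
  proof -
    have "dist p1 p2 = r/2" using r by (simp add: p2_def dist_norm norm_axis_1)
    then show "p2 \<in> \<Omega>" using r by auto
    have "p2 $ i0 = p1 $ i0 + r/2" by (simp add: p2_def)
    then show "p1 \<noteq> p2" using r by auto
  qed
  define M1 where "M1 = 1 + 2 * K * (2 * real nU + K0 * (1 + 3 * R))"
  have M1: "M1 \<ge> 1" "M1 > 0"
  proof -
    have "K0 * (1 + 3 * R) \<ge> 0" using K0 R by simp
    then have "2 * real nU + K0 * (1 + 3 * R) \<ge> 0" by simp
    then have "2 * K * (2 * real nU + K0 * (1 + 3 * R)) \<ge> 0" using K0' by simp
    then show "M1 \<ge> 1" "M1 > 0" unfolding M1_def by linarith+
  qed
  have main: "\<exists>Phi :: real^'n \<Rightarrow> real^'n. \<exists>a :: nat \<Rightarrow> real^'n \<Rightarrow> real. \<exists>G :: real^'n^'n.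
              Cinf_closure \<Omega> Phi \<and> (\<forall>i\<in>{1..nU}. holder_space \<Omega> j \<alpha> (a i)) \<and>
              (\<forall>x\<in>\<Omega>. (Phi has_derivative (\<lambda>h. G *v h)) (at x)) \<and>
              (\<forall>x\<in>closure \<Omega>. Dh x + symm_part G = (\<Sum>i=1..nU. (a i x)\<^sup>2 *\<^sub>R tensor_sq (\<xi> i))) \<and>
              holder_norm \<Omega> 0 \<alpha> (\<lambda>x. \<Sum>i=1..nU. (a i x)\<^sup>2 *\<^sub>R tensor_sq (\<xi> i)) + norm G
                + holder_norm \<Omega> 0 \<alpha> Phi \<le> M1 * holder_norm \<Omega> 0 \<alpha> Dh \<and>
              holder_seminorm \<Omega> j \<alpha> (\<lambda>x. \<Sum>i=1..nU. (a i x)\<^sup>2 *\<^sub>R tensor_sq (\<xi> i)) + norm G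
                + holder_norm \<Omega> 0 \<alpha> Phi \<le> M1 * holder_norm \<Omega> j \<alpha> Dh"
    if H: "holder_space \<Omega> j \<alpha> Dh" "\<forall>x\<in>closure \<Omega>. Dh x \<in> U" for Dh :: "real^'n \<Rightarrow> real^'n^'n"
  proof -
    have hsD: "Hs \<Omega> \<alpha> j Dh" and contD: "continuous_on (closure \<Omega>) Dh"
      using H(1) holder_space_Hs by blast+
    obtain BD where BD: "\<And>x. x \<in> \<Omega> \<Longrightarrow> norm (Dh x) \<le> BD" using Hs_bounded[OF hsD] by blast
    have bDimg: "bounded (Dh ` \<Omega>)" unfolding bounded_iff using BD by blast
    define S where "S = supnorm \<Omega> Dh"
    have S0: "S \<ge> 0" unfolding S_def by (rule supnorm_nonneg[OF bDimg p1])
    have SD: "norm (Dh x) \<le> S" if "x \<in> closure \<Omega>" for x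
      using continuous_on_closure_norm_le[OF contD _ that] supnorm_upper[OF bDimg] unfolding S_def by blast
    define c where "c = 2 * K * S"
    have c0: "c \<ge> 0" using K0' S0 by (simp add: c_def)
    define G where "G = c *\<^sub>R G0"
    define a where "a = (\<lambda>i x. sqrt (Lc i (Dh x) + c))"
    have KS0: "K * S \<ge> 0" using K0' S0 by simp
    have low: "Lc i (Dh x) + c \<ge> K * S" if "i \<in> {1..nU}" "x \<in> closure \<Omega>" for i x
    proof -
      have "\<bar>Lc i (Dh x)\<bar> \<le> K * norm (Dh x)" using Kb that(1) by blast
      also have "\<dots> \<le> K * S" using SD[OF that(2)] K0' by (simp add: mult_left_mono)
      finally show ?thesis unfolding c_def by linarith
    qed
    have sq: "(a i x)\<^sup>2 = Lc i (Dh x) + c" if "i \<in> {1..nU}" "x \<in> closure \<Omega>" for i x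
      using low[OF that] KS0 by (simp add: a_def)
    have sumeq: "(\<Sum>i=1..nU. (a i x)\<^sup>2 *\<^sub>R tensor_sq (\<xi> i)) = Dh x + G" if x: "x \<in> closure \<Omega>" for x
    proof -
      have "(\<Sum>i=1..nU. (a i x)\<^sup>2 *\<^sub>R tensor_sq (\<xi> i)) = (\<Sum>i\<in>{1..nU}. Lc i (Dh x) *\<^sub>R T i + c *\<^sub>R T i)"
        by (rule sum.cong) (simp_all add: sq x T_def scaleR_add_left)
      also have "\<dots> = (\<Sum>i\<in>{1..nU}. Lc i (Dh x) *\<^sub>R T i) + c *\<^sub>R G0"
        by (simp add: sum.distrib G0_def scaleR_sum_right)
      also have "(\<Sum>i\<in>{1..nU}. Lc i (Dh x) *\<^sub>R T i) = Dh x"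
        using repr[of "Dh x"] H(2) x by simp
      finally show ?thesis by (simp add: G_def)
    qed
    have symG: "symm_part G = G"
      unfolding symm_part_def by (simp add: vec_eq_iff transpose_def G_def G0sym)
    have hs_a: "holder_space \<Omega> j \<alpha> (a i)" if i: "i \<in> {1..nU}" for i
    proof -
      have "continuous_on (closure \<Omega>) (a i)"
        unfolding a_def
        by (intro continuous_on_real_sqrt continuous_on_add continuous_on_const
            bounded_linear.continuous_on[OF LcB[OF i] contD])
      moreover have "Hs \<Omega> \<alpha> j (a i)"
      proof (cases "S = 0")
        case True
        have "a i x = 0" if "x \<in> \<Omega>" for x
        proof -
          have "Dh x = 0" using SD[of x] that closure_subset True by force
          then show ?thesis using LcB[OF i] True by (simp add: a_def c_def linear_simps)
        qed
        then show ?thesis using Hs_cong[OF op Hs_const[OF op, of \<alpha> j 0], of "a i"] by auto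
      next
        case False
        then have m: "K * S > 0" using K0' S0 by simp
        have g: "Hs \<Omega> \<alpha> j (\<lambda>x. Lc i (Dh x) + c)"
          by (rule Hs_add[OF Hs_lin[OF LcB[OF i] hsD] Hs_const[OF op]])
        have "\<forall>x\<in>\<Omega>. Lc i (Dh x) + c \<ge> K * S" using low[OF i] closure_subset by blast
        then show ?thesis using Hs_sqrt[OF m g] unfolding a_def by blast
      qed
      ultimately show ?thesis using holder_space_Hs by blast
    qed
    have nPhi: "norm (G *v x) \<le> c * K0 * norm x" for x
    proof -
      have "G *v x = c *\<^sub>R (G0 *v x)" by (simp add: G_def scaleR_matrix_vector_assoc)
      then have "norm (G *v x) = c * norm (G0 *v x)" using c0 by simp
      also have "\<dots> \<le> c * (norm x * K0)" using K0(2)[of x] c0 by (simp add: mult_left_mono)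
      finally show ?thesis by (simp add: algebra_simps)
    qed
    have cK0: "c * K0 \<ge> 0" using c0 K0 by simp
    have supPhi: "supnorm \<Omega> (\<lambda>x. G *v x) \<le> c * K0 * R"
    proof (rule supnorm_le)
      show "\<Omega> \<noteq> {}" using p1 by blast
      fix x assume "x \<in> \<Omega>"
      then show "norm (G *v x) \<le> c * K0 * R"
        using nPhi[of x] R(2)[of x] cK0 by (meson mult_left_mono order_trans)
    qed
    have semiPhi: "holder_semi \<Omega> \<alpha> (\<lambda>x. G *v x) \<le> c * K0 * (1 + 2 * R)"
    proof (rule semi_le[OF p1 p2(1) p2(2)])
      fix x y assume x: "x \<in> \<Omega>" and y: "y \<in> \<Omega>" and xy: "x \<noteq> y"
      define d where "d = dist x y"
      have d: "d > 0" using xy by (simp add: d_def)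
      have d2: "d \<le> 2 * R"
      proof -
        have "d \<le> norm x + norm y" unfolding d_def dist_norm by (rule norm_triangle_ineq4)
        then show ?thesis using R(2)[OF x] R(2)[OF y] by linarith
      qed
      have "norm (G *v x - G *v y) = norm (G *v (x - y))" by (simp add: matrix_vector_mult_diff_distrib)
      also have "\<dots> \<le> c * K0 * d" using nPhi[of "x - y"] by (simp add: d_def dist_norm)
      finally have nb: "norm (G *v x - G *v y) \<le> c * K0 * d" .
      have dp: "d powr \<alpha> > 0" using d by simp
      have "norm (G *v x - G *v y) / d powr \<alpha> \<le> c * K0 * d / d powr \<alpha>"
        using nb dp by (simp add: divide_right_mono)
      also have "\<dots> = c * K0 * (d / d powr \<alpha>)" by simp
      also have "\<dots> \<le> c * K0 * (1 + 2 * R)"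
        using lin_quot[OF d d2] a0 a1 cK0 by (intro mult_left_mono) auto
      finally show "norm (G *v x - G *v y) / dist x y powr \<alpha> \<le> c * K0 * (1 + 2 * R)" by (simp add: d_def)
    qed
    have hnPhi: "holder_norm \<Omega> 0 \<alpha> (\<lambda>x. G *v x) \<le> c * K0 * (1 + 3 * R)"
      using supPhi semiPhi unfolding holder_norm0 by (simp add: algebra_simps)
    have nG: "norm G \<le> c * real nU"
      using nG0 c0 by (simp add: G_def mult_left_mono)
    define Sig where "Sig = (\<lambda>x. \<Sum>i=1..nU. (a i x)\<^sup>2 *\<^sub>R tensor_sq (\<xi> i))"
    have SigO: "Sig x = Dh x + G" if "x \<in> \<Omega>" for x
      using sumeq[of x] that closure_subset unfolding Sig_def by blast
    define h where "h = holder_semi \<Omega> \<alpha> Dh"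
    have hD0: "Hs \<Omega> \<alpha> 0 Dh" using Hs_mono[OF _ hsD] by simp
    have h0: "h \<ge> 0" unfolding h_def using hD0 unfolding Hs_0 by (intro semi_nonneg[OF _ p1 p2(1) p2(2)]) auto
    have supSig: "supnorm \<Omega> Sig \<le> S + norm G"
    proof -
      have "supnorm \<Omega> Sig = supnorm \<Omega> (\<lambda>x. Dh x + G)" by (rule supnorm_cong) (rule SigO)
      also have "\<dots> \<le> S + norm G"
      proof (rule supnorm_le)
        show "\<Omega> \<noteq> {}" using p1 by blast
        fix x assume x: "x \<in> \<Omega>"
        have "norm (Dh x + G) \<le> norm (Dh x) + norm G" by (rule norm_triangle_ineq)
        then show "norm (Dh x + G) \<le> S + norm G" using SD[of x] x closure_subset by force
      qed
      finally show ?thesis .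
    qed
    have semiSig: "holder_semi \<Omega> \<alpha> Sig = h"
    proof -
      have "holder_quots \<Omega> \<alpha> Sig = holder_quots \<Omega> \<alpha> (\<lambda>x. Dh x + G)" by (rule holder_quots_cong) (rule SigO)
      then show ?thesis unfolding h_def holder_semi_def by (simp add: quots_shift)
    qed
    have hnSig: "holder_norm \<Omega> 0 \<alpha> Sig \<le> S + norm G + h"
      using supSig semiSig unfolding holder_norm0 by simp
    have hnD: "holder_norm \<Omega> 0 \<alpha> Dh = S + h" unfolding holder_norm0 S_def h_def by simp
    have cX: "c * real nU + c * real nU + c * K0 * (1 + 3 * R) = (M1 - 1) * S"
      unfolding M1_def c_def by (simp add: algebra_simps)
    have bound1: "holder_norm \<Omega> 0 \<alpha> Sig + norm G + holder_norm \<Omega> 0 \<alpha> (\<lambda>x. G *v x) \<le> M1 * holder_norm \<Omega> 0 \<alpha> Dh"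
    proof -
      have "holder_norm \<Omega> 0 \<alpha> Sig + norm G + holder_norm \<Omega> 0 \<alpha> (\<lambda>x. G *v x)
          \<le> S + h + (M1 - 1) * S" using hnSig nG hnPhi cX by linarith
      also have "\<dots> \<le> M1 * (S + h)"
      proof -
        have "h \<le> M1 * h" using mult_right_mono[OF M1(1) h0] by simp
        then show ?thesis by (simp add: algebra_simps)
      qed
      finally show ?thesis unfolding hnD .
    qed
    have hpD: "has_pderivs_upto \<Omega> j Dh" using hsD unfolding Hs_def by blast
    have semj: "holder_seminorm \<Omega> j \<alpha> Sig = holder_seminorm \<Omega> j \<alpha> Dh"
      unfolding holder_seminorm_def
    proof (rule sum.cong[OF refl])
      fix \<beta> :: "'n list" assume "\<beta> \<in> {\<beta>. length \<beta> = j}"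
      then have l: "length \<beta> \<le> j" by simp
      have "holder_quots \<Omega> \<alpha> (pdiff \<beta> Sig) = holder_quots \<Omega> \<alpha> (\<lambda>x. pdiff \<beta> Dh x + (if \<beta> = [] then G else 0))"
      proof (rule holder_quots_cong)
        fix x assume x: "x \<in> \<Omega>"
        have "pdiff \<beta> Sig x = pdiff \<beta> (\<lambda>y. Dh y + G) x" by (rule pdiff_cong[OF op x SigO])
        also have "\<dots> = pdiff \<beta> Dh x + (if \<beta> = [] then G else 0)" by (rule pdiff_add_const[OF op hpD l x])
        finally show "pdiff \<beta> Sig x = pdiff \<beta> Dh x + (if \<beta> = [] then G else 0)" .
      qed
      then show "holder_semi \<Omega> \<alpha> (pdiff \<beta> Sig) = holder_semi \<Omega> \<alpha> (pdiff \<beta> Dh)"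
        unfolding holder_semi_def by (simp add: quots_shift)
    qed
    define hj where "hj = holder_seminorm \<Omega> j \<alpha> Dh"
    have hj0: "hj \<ge> 0" unfolding hj_def holder_seminorm_def
    proof (rule sum_nonneg)
      fix \<beta> :: "'n list" assume "\<beta> \<in> {\<beta>. length \<beta> = j}"
      then have "bdd_above (holder_quots \<Omega> \<alpha> (pdiff \<beta> Dh))" using hsD unfolding Hs_def by auto
      then show "holder_semi \<Omega> \<alpha> (pdiff \<beta> Dh) \<ge> 0" by (rule semi_nonneg[OF _ p1 p2(1) p2(2)])
    qed
    have hnj: "holder_norm \<Omega> j \<alpha> Dh \<ge> S + hj"
    proof -
      define X where "X m = (\<Sum>\<beta>\<in>{\<beta>::'n list. length \<beta> = m}. supnorm \<Omega> (pdiff \<beta> Dh))" for m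
      have X0: "X m \<ge> 0" if "m \<in> {..j}" for m
        unfolding X_def
      proof (rule sum_nonneg)
        fix \<beta> :: "'n list" assume "\<beta> \<in> {\<beta>. length \<beta> = m}"
        then have "length \<beta> \<le> j" using that by simp
        then have "uniformly_continuous_on \<Omega> (pdiff \<beta> Dh)" using hsD unfolding Hs_def by blast
        then have "bounded (pdiff \<beta> Dh ` \<Omega>)" using bounded_uniformly_continuous_image assms(4) by blast
        then show "supnorm \<Omega> (pdiff \<beta> Dh) \<ge> 0" by (rule supnorm_nonneg[OF _ p1])
      qed
      have "X 0 = S"
      proof -
        have e: "{\<beta>::'n list. length \<beta> = 0} = {[]}" by auto
        show ?thesis unfolding X_def e S_def by simp
      qed
      moreover have "X 0 \<le> (\<Sum>m\<le>j. X m)" using X0 by (intro member_le_sum) auto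
      ultimately show ?thesis unfolding holder_norm_def hj_def X_def[symmetric] by linarith
    qed
    have bound2: "holder_seminorm \<Omega> j \<alpha> Sig + norm G + holder_norm \<Omega> 0 \<alpha> (\<lambda>x. G *v x) \<le> M1 * holder_norm \<Omega> j \<alpha> Dh"
    proof -
      have "holder_seminorm \<Omega> j \<alpha> Sig + norm G + holder_norm \<Omega> 0 \<alpha> (\<lambda>x. G *v x) \<le> hj + (M1 - 1) * S"
        using semj nG hnPhi cX c0 unfolding hj_def
        by (smt (verit) mult_nonneg_nonneg of_nat_0_le_iff)
      also have "\<dots> \<le> M1 * (S + hj)"
      proof -
        have "hj \<le> M1 * hj" using mult_right_mono[OF M1(1) hj0] by simp
        then show ?thesis using S0 by (simp add: algebra_simps)
      qed
      also have "\<dots> \<le> M1 * holder_norm \<Omega> j \<alpha> Dh" using hnj M1 by (simp add: mult_left_mono)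
      finally show ?thesis .
    qed
    show ?thesis
    proof (intro exI[of _ "\<lambda>x. G *v x"] exI[of _ a] exI[of _ G] conjI ballI)
      show "Cinf_closure \<Omega> (\<lambda>x. G *v x)" by (rule Cinf_lin)
      show "holder_space \<Omega> j \<alpha> (a i)" if "i \<in> {1..nU}" for i using hs_a that by blast
      show "((\<lambda>x. G *v x) has_derivative (\<lambda>h. G *v h)) (at x)" for x
        by (rule bounded_linear_imp_has_derivative[OF matrix_vector_mul_bounded_linear])
      show "Dh x + symm_part G = (\<Sum>i=1..nU. (a i x)\<^sup>2 *\<^sub>R tensor_sq (\<xi> i))" if "x \<in> closure \<Omega>" for x
        using sumeq[OF that] symG by simp
      show "holder_norm \<Omega> 0 \<alpha> (\<lambda>x. \<Sum>i=1..nU. (a i x)\<^sup>2 *\<^sub>R tensor_sq (\<xi> i)) + norm G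
                + holder_norm \<Omega> 0 \<alpha> (\<lambda>x. G *v x) \<le> M1 * holder_norm \<Omega> 0 \<alpha> Dh"
        using bound1 unfolding Sig_def .
      show "holder_seminorm \<Omega> j \<alpha> (\<lambda>x. \<Sum>i=1..nU. (a i x)\<^sup>2 *\<^sub>R tensor_sq (\<xi> i)) + norm G
                + holder_norm \<Omega> 0 \<alpha> (\<lambda>x. G *v x) \<le> M1 * holder_norm \<Omega> j \<alpha> Dh"
        using bound2 unfolding Sig_def .
    qed
  qed
  show ?thesis
    by (rule exI[of _ M1], rule conjI[OF M1(2)], rule exI[of _ M1], rule conjI[OF M1(2)])
      (use main in blast)
qed

end
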